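(* Let $W$ be a Coxeter group, $w\in W$, $J\subseteq S$, and suppose $w=w^Jw_J$ is a Billey--Postnikov decomposition such that $\supp(w^J)\cap\supp(w_J)=\{s\}$ for some $s\in S$. Then the middle multiplication map $\phi: x\mapsto x^J\, s\, x_J$ is an automorphism of the Bruhat graph $\Gamma(e,w)$.
   Context: $(W,S)$ is a Coxeter system with reflections $T$, length $\ell$, Bruhat order $\le$, identity $e$; $\Gamma(e,w)$ is the simple undirected graph on $[e,w]$ with edges $\{x,y\}$ whenever $y=xt$, $t\in T$. For $J\subseteq S$, $W_J$ is the subgroup generated by $J$; each $x\in W$ factors uniquely as $x=x^Jx_J$ with $x_J\in W_J$ and $x^J$ the unique minimal-length element of $xW_J$ (then $\ell(x)=\ell(x^J)+\ell(x_J)$). $\supp(x)$ is the set of simple generators appearing in a reduced word of $x$, and $D_L(x)=\{s\in S:\ell(sx)<\ell(x)\}$. The decomposition $w=w^Jw_J$ is a Billey--Postnikov (BP) decomposition if $\supp(w^J)\cap J\subseteq D_L(w_J)$. *)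

theory Defs
  imports "HOL-Algebra.Group"
begin

definition wprod :: "('a, 'b) monoid_scheme \<Rightarrow> 'a list \<Rightarrow> 'a" where
  "wprod W xs = foldr (\<lambda>x y. x \<otimes>\<^bsub>W\<^esub> y) xs \<one>\<^bsub>W\<^esub>"

definition coxeter_relators :: "('a, 'b) monoid_scheme \<Rightarrow> 'a set \<Rightarrow> 'a list set" where
  "coxeter_relators W S =
     {[s, s] | s. s \<in> S} \<union>
     {concat (replicate m [s, t]) | s t m. s \<in> S \<and> t \<in> S \<and> m > 0 \<and>
                                   (s \<otimes>\<^bsub>W\<^esub> t) [^]\<^bsub>W\<^esub> m = \<one>\<^bsub>W\<^esub>}"

inductive word_equiv :: "('a, 'b) monoid_scheme \<Rightarrow> 'a set \<Rightarrow> 'a list \<Rightarrow> 'a list \<Rightarrow> bool"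
  for W S where
  refl: "word_equiv W S u u"
| sym: "word_equiv W S u v \<Longrightarrow> word_equiv W S v u"
| trans: "word_equiv W S u v \<Longrightarrow> word_equiv W S v x \<Longrightarrow> word_equiv W S u x"
| rel: "r \<in> coxeter_relators W S \<Longrightarrow> word_equiv W S (u @ r @ v) (u @ v)"

text \<open>(W,S) is a Coxeter system: W is a group generated by the set S of involutions
  and every relation among the generators is a consequence of the Coxeter relations
  (s t)^{m(s,t)} = 1, i.e. W has the Coxeter presentation on S.\<close>
definition coxeter_system :: "('a, 'b) monoid_scheme \<Rightarrow> 'a set \<Rightarrow> bool" where
  "coxeter_system W S \<longleftrightarrow>
     group W \<and> S \<subseteq> carrier W \<and> \<one>\<^bsub>W\<^esub> \<notin> S \<and>
     (\<forall>s\<in>S. s \<otimes>\<^bsub>W\<^esub> s = \<one>\<^bsub>W\<^esub>) \<and>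
     (\<forall>x\<in>carrier W. \<exists>xs\<in>lists S. wprod W xs = x) \<and>
     (\<forall>xs\<in>lists S. wprod W xs = \<one>\<^bsub>W\<^esub> \<longrightarrow> word_equiv W S xs [])"

definition cox_length :: "('a, 'b) monoid_scheme \<Rightarrow> 'a set \<Rightarrow> 'a \<Rightarrow> nat" where
  "cox_length W S x = (LEAST n. \<exists>xs\<in>lists S. length xs = n \<and> wprod W xs = x)"

definition reduced_word :: "('a, 'b) monoid_scheme \<Rightarrow> 'a set \<Rightarrow> 'a list \<Rightarrow> 'a \<Rightarrow> bool" where
  "reduced_word W S xs x \<longleftrightarrow> xs \<in> lists S \<and> wprod W xs = x \<and> length xs = cox_length W S x"

definition reflections :: "('a, 'b) monoid_scheme \<Rightarrow> 'a set \<Rightarrow> 'a set" where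
  "reflections W S = {w \<otimes>\<^bsub>W\<^esub> s \<otimes>\<^bsub>W\<^esub> inv\<^bsub>W\<^esub> w | w s. w \<in> carrier W \<and> s \<in> S}"

definition bruhat_step :: "('a, 'b) monoid_scheme \<Rightarrow> 'a set \<Rightarrow> 'a \<Rightarrow> 'a \<Rightarrow> bool" where
  "bruhat_step W S x y \<longleftrightarrow> x \<in> carrier W \<and>
     (\<exists>t\<in>reflections W S. y = x \<otimes>\<^bsub>W\<^esub> t) \<and> cox_length W S x < cox_length W S y"

definition bruhat_le :: "('a, 'b) monoid_scheme \<Rightarrow> 'a set \<Rightarrow> 'a \<Rightarrow> 'a \<Rightarrow> bool" where
  "bruhat_le W S x y \<longleftrightarrow> x \<in> carrier W \<and> y \<in> carrier W \<and> (bruhat_step W S)\<^sup>*\<^sup>* x y"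

definition bruhat_interval :: "('a, 'b) monoid_scheme \<Rightarrow> 'a set \<Rightarrow> 'a \<Rightarrow> 'a \<Rightarrow> 'a set" where
  "bruhat_interval W S u v = {x. bruhat_le W S u x \<and> bruhat_le W S x v}"

definition bruhat_edge :: "('a, 'b) monoid_scheme \<Rightarrow> 'a set \<Rightarrow> 'a \<Rightarrow> 'a \<Rightarrow> bool" where
  "bruhat_edge W S x y \<longleftrightarrow> (\<exists>t\<in>reflections W S. y = x \<otimes>\<^bsub>W\<^esub> t)"

definition bruhat_graph_automorphism ::
  "('a, 'b) monoid_scheme \<Rightarrow> 'a set \<Rightarrow> 'a \<Rightarrow> ('a \<Rightarrow> 'a) \<Rightarrow> bool" where
  "bruhat_graph_automorphism W S w \<phi> \<longleftrightarrow>
     (let V = bruhat_interval W S \<one>\<^bsub>W\<^esub> w in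
       bij_betw \<phi> V V \<and>
       (\<forall>x\<in>V. \<forall>y\<in>V. bruhat_edge W S x y \<longleftrightarrow> bruhat_edge W S (\<phi> x) (\<phi> y)))"

definition parabolic :: "('a, 'b) monoid_scheme \<Rightarrow> 'a set \<Rightarrow> 'a set" where
  "parabolic W J = {wprod W xs | xs. xs \<in> lists J}"

definition min_rep :: "('a, 'b) monoid_scheme \<Rightarrow> 'a set \<Rightarrow> 'a set \<Rightarrow> 'a \<Rightarrow> 'a" where
  "min_rep W S J x = (THE u. u \<in> {x \<otimes>\<^bsub>W\<^esub> h | h. h \<in> parabolic W J} \<and>
      (\<forall>v\<in>{x \<otimes>\<^bsub>W\<^esub> h | h. h \<in> parabolic W J}. v \<noteq> u \<longrightarrow> cox_length W S u < cox_length W S v))"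

definition par_part :: "('a, 'b) monoid_scheme \<Rightarrow> 'a set \<Rightarrow> 'a set \<Rightarrow> 'a \<Rightarrow> 'a" where
  "par_part W S J x = inv\<^bsub>W\<^esub> (min_rep W S J x) \<otimes>\<^bsub>W\<^esub> x"

text \<open>Support: generators appearing in a reduced word (independent of the choice).\<close>
definition supp :: "('a, 'b) monoid_scheme \<Rightarrow> 'a set \<Rightarrow> 'a \<Rightarrow> 'a set" where
  "supp W S x = \<Union>{set xs | xs. reduced_word W S xs x}"

definition left_descents :: "('a, 'b) monoid_scheme \<Rightarrow> 'a set \<Rightarrow> 'a \<Rightarrow> 'a set" where
  "left_descents W S x = {s\<in>S. cox_length W S (s \<otimes>\<^bsub>W\<^esub> x) < cox_length W S x}"

definition BP_decomposition :: "('a, 'b) monoid_scheme \<Rightarrow> 'a set \<Rightarrow> 'a set \<Rightarrow> 'a \<Rightarrow> bool" where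
  "BP_decomposition W S J w \<longleftrightarrow>
     supp W S (min_rep W S J w) \<inter> J \<subseteq> left_descents W S (par_part W S J w)"

end

theory Submission
  imports Defs "HOL-Library.Sublist"
begin

locale coxsys = group W for W :: "('a, 'b) monoid_scheme" (structure) +
  fixes S :: "'a set"
  assumes cs: "coxeter_system W S"
begin

abbreviation len where "len x \<equiv> cox_length W S x"
abbreviation T where "T \<equiv> reflections W S"

lemma S_carrier: "S \<subseteq> carrier W"
  using cs unfolding coxeter_system_def by auto

lemma one_notin_S: "\<one> \<notin> S"
  using cs unfolding coxeter_system_def by auto

lemma S_inv: "s \<in> S \<Longrightarrow> s \<otimes> s = \<one>"
  using cs unfolding coxeter_system_def by auto

lemma S_gen: "x \<in> carrier W \<Longrightarrow> \<exists>xs\<in>lists S. wprod W xs = x"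
  using cs unfolding coxeter_system_def by auto

lemma S_pres: "xs \<in> lists S \<Longrightarrow> wprod W xs = \<one> \<Longrightarrow> word_equiv W S xs []"
  using cs unfolding coxeter_system_def by auto

lemma S_in [simp]: "s \<in> S \<Longrightarrow> s \<in> carrier W"
  using S_carrier by auto

lemma S_inv' [simp]: "s \<in> S \<Longrightarrow> inv s = s"
  using S_inv by (simp add: inv_equality)

lemma wprod_Nil [simp]: "wprod W [] = \<one>"
  by (simp add: wprod_def)

lemma wprod_Cons [simp]: "wprod W (x # xs) = x \<otimes> wprod W xs"
  by (simp add: wprod_def)

lemma wprod_closed [simp]: "set xs \<subseteq> carrier W \<Longrightarrow> wprod W xs \<in> carrier W"
  by (induct xs) auto

lemma wprod_closed' [simp]: "xs \<in> lists S \<Longrightarrow> wprod W xs \<in> carrier W"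
  by (induct xs) auto

lemma wprod_append: "set xs \<subseteq> carrier W \<Longrightarrow> set ys \<subseteq> carrier W \<Longrightarrow>
    wprod W (xs @ ys) = wprod W xs \<otimes> wprod W ys"
  by (induct xs) (auto simp: m_assoc)

lemma wprod_append' [simp]: "xs \<in> lists S \<Longrightarrow> ys \<in> lists S \<Longrightarrow>
    wprod W (xs @ ys) = wprod W xs \<otimes> wprod W ys"
  by (rule wprod_append) auto

lemma wprod_rev: "xs \<in> lists S \<Longrightarrow> wprod W (rev xs) = inv (wprod W xs)"
proof (induct xs)
  case Nil then show ?case by simp
next
  case (Cons a xs)
  then have "rev xs \<in> lists S" "[a] \<in> lists S" by auto
  then have "wprod W (rev (a # xs)) = inv (wprod W xs) \<otimes> a"
    using Cons by (simp del: wprod_Cons) simp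
  then show ?case using Cons by (simp add: inv_mult_group)
qed

end


context coxsys
begin

definition tref :: "'a list \<Rightarrow> nat \<Rightarrow> 'a" where
  "tref xs i = wprod W (take i xs) \<otimes> xs ! i \<otimes> inv (wprod W (take i xs))"

definition cnt :: "'a list \<Rightarrow> 'a \<Rightarrow> nat" where
  "cnt xs r = card {i. i < length xs \<and> tref xs i = r}"

definition nD :: "'a list \<Rightarrow> 'a \<Rightarrow> bool" where
  "nD xs r = odd (cnt xs r)"

lemma cancel1 [simp]: "p \<in> carrier W \<Longrightarrow> r \<in> carrier W \<Longrightarrow> p \<otimes> (inv p \<otimes> r) = r"
  by (simp add: m_assoc[symmetric])

lemma cancel2 [simp]: "p \<in> carrier W \<Longrightarrow> r \<in> carrier W \<Longrightarrow> inv p \<otimes> (p \<otimes> r) = r"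
  by (simp add: m_assoc[symmetric])

lemma wprod_take_closed [simp]: "xs \<in> lists S \<Longrightarrow> wprod W (take i xs) \<in> carrier W"
  by (metis in_lists_conv_set in_set_takeD wprod_closed')

lemma wprod_ball_closed [simp]: "\<forall>x\<in>set xs. x \<in> S \<Longrightarrow> wprod W xs \<in> carrier W"
  by (metis in_lists_conv_set wprod_closed')

lemma wprod_take_ball_closed [simp]: "\<forall>x\<in>set xs. x \<in> S \<Longrightarrow> wprod W (take i xs) \<in> carrier W"
  by (metis in_lists_conv_set wprod_take_closed)

lemma lists_take [intro]: "xs \<in> lists S \<Longrightarrow> take i xs \<in> lists S"
  by (metis in_lists_conv_set in_set_takeD)

lemma lists_drop [intro]: "xs \<in> lists S \<Longrightarrow> drop i xs \<in> lists S"
  by (metis in_lists_conv_set in_set_dropD)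

lemma lists_nth [intro]: "xs \<in> lists S \<Longrightarrow> i < length xs \<Longrightarrow> xs ! i \<in> S"
  by (simp add: in_lists_conv_set)

lemma tref_closed: "xs \<in> lists S \<Longrightarrow> i < length xs \<Longrightarrow> tref xs i \<in> carrier W"
  unfolding tref_def by (intro m_closed inv_closed) (auto dest: lists_nth)

lemma tref_append1: "i < length xs \<Longrightarrow> tref (xs @ ys) i = tref xs i"
  unfolding tref_def by (simp add: nth_append)

lemma tref_append2: "xs \<in> lists S \<Longrightarrow> ys \<in> lists S \<Longrightarrow> j < length ys \<Longrightarrow>
   tref (xs @ ys) (length xs + j) = wprod W xs \<otimes> tref ys j \<otimes> inv (wprod W xs)"
proof -
  assume a: "xs \<in> lists S" "ys \<in> lists S" "j < length ys"
  have c: "wprod W xs \<in> carrier W" "wprod W (take j ys) \<in> carrier W" "ys ! j \<in> carrier W"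
    using a by (auto dest: lists_nth)
  have "tref (xs @ ys) (length xs + j) =
     (wprod W xs \<otimes> wprod W (take j ys)) \<otimes> ys ! j \<otimes> inv (wprod W xs \<otimes> wprod W (take j ys))"
    unfolding tref_def using a by (simp add: nth_append lists_take)
  also have "\<dots> = wprod W xs \<otimes> tref ys j \<otimes> inv (wprod W xs)"
    unfolding tref_def using c by (simp add: inv_mult_group m_assoc)
  finally show ?thesis .
qed

lemma cnt_append:
  assumes a: "xs \<in> lists S" "ys \<in> lists S" "r \<in> carrier W"
  shows "cnt (xs @ ys) r = cnt xs r + cnt ys (inv (wprod W xs) \<otimes> r \<otimes> wprod W xs)"
proof -
  let ?p = "wprod W xs"
  have pc: "?p \<in> carrier W" using a by auto
  let ?A = "{i. i < length xs \<and> tref xs i = r}"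
  let ?B = "{j. j < length ys \<and> tref ys j = inv ?p \<otimes> r \<otimes> ?p}"
  have eq: "{i. i < length (xs @ ys) \<and> tref (xs @ ys) i = r} = ?A \<union> (\<lambda>j. length xs + j) ` ?B"
  proof (intro Set.set_eqI iffI)
    fix i assume "i \<in> {i. i < length (xs @ ys) \<and> tref (xs @ ys) i = r}"
    then have i: "i < length xs + length ys" "tref (xs @ ys) i = r" by auto
    show "i \<in> ?A \<union> (\<lambda>j. length xs + j) ` ?B"
    proof (cases "i < length xs")
      case True then show ?thesis using i by (simp add: tref_append1)
    next
      case False
      then obtain j where j: "i = length xs + j" "j < length ys" using i
        by (metis add_less_imp_less_left le_iff_add not_less)
      have tc: "tref ys j \<in> carrier W" using tref_closed a j by auto
      have "?p \<otimes> tref ys j \<otimes> inv ?p = r" using i j tref_append2 a by simp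
      then have "tref ys j = inv ?p \<otimes> r \<otimes> ?p"
        using pc tc a by (metis inv_closed inv_solve_left' inv_solve_right' m_closed m_assoc)
      then show ?thesis using j by auto
    qed
  next
    fix i assume "i \<in> ?A \<union> (\<lambda>j. length xs + j) ` ?B"
    then show "i \<in> {i. i < length (xs @ ys) \<and> tref (xs @ ys) i = r}"
    proof
      assume "i \<in> ?A" then show ?thesis by (auto simp: tref_append1)
    next
      assume "i \<in> (\<lambda>j. length xs + j) ` ?B"
      then obtain j where j: "i = length xs + j" "j < length ys" "tref ys j = inv ?p \<otimes> r \<otimes> ?p" by auto
      have "tref (xs @ ys) i = ?p \<otimes> (inv ?p \<otimes> r \<otimes> ?p) \<otimes> inv ?p"
        using j tref_append2 a by simp
      also have "\<dots> = r" using pc a by (simp add: m_assoc)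
      finally show ?thesis using j by simp
    qed
  qed
  have "card (?A \<union> (\<lambda>j. length xs + j) ` ?B) = card ?A + card ((\<lambda>j. length xs + j) ` ?B)"
    by (rule card_Un_disjoint) auto
  also have "card ((\<lambda>j. length xs + j) ` ?B) = card ?B"
    by (rule card_image) (auto simp: inj_on_def)
  finally show ?thesis unfolding cnt_def eq by simp
qed

lemma nD_append:
  assumes "xs \<in> lists S" "ys \<in> lists S" "r \<in> carrier W"
  shows "nD (xs @ ys) r = (nD xs r \<noteq> nD ys (inv (wprod W xs) \<otimes> r \<otimes> wprod W xs))"
  unfolding nD_def cnt_append[OF assms] by simp

lemma nD_Nil [simp]: "nD [] r = False"
  by (simp add: nD_def cnt_def)

definition alt :: "'a \<Rightarrow> 'a \<Rightarrow> nat \<Rightarrow> 'a list" where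
  "alt s t m = concat (replicate m [s, t])"

lemma alt_Suc: "alt s t (Suc m) = [s, t] @ alt s t m"
  by (simp add: alt_def)

lemma alt_lists: "s \<in> S \<Longrightarrow> t \<in> S \<Longrightarrow> alt s t m \<in> lists S"
  by (induct m) (auto simp: alt_def)

lemma alt_length: "length (alt s t m) = 2 * m"
  by (induct m) (auto simp: alt_def)

lemma alt_wprod: "s \<in> S \<Longrightarrow> t \<in> S \<Longrightarrow> wprod W (alt s t m) = (s \<otimes> t) [^] m"
proof (induct m)
  case 0 then show ?case by (simp add: alt_def)
next
  case (Suc m)
  have cc: "s \<otimes> t \<in> carrier W" using Suc by simp
  have "wprod W (alt s t (Suc m)) = (s \<otimes> t) \<otimes> (s \<otimes> t) [^] m"
    using Suc alt_lists[of s t m] by (simp add: alt_Suc m_assoc)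
  then show ?case using nat_pow_Suc2[OF cc, of m] by simp
qed

lemma alt_tref: "s \<in> S \<Longrightarrow> t \<in> S \<Longrightarrow> i < 2 * m \<Longrightarrow> tref (alt s t m) i = (s \<otimes> t) [^] i \<otimes> s"
proof (induct m arbitrary: i)
  case 0 then show ?case by simp
next
  case (Suc m)
  let ?c = "s \<otimes> t"
  have cc: "?c \<in> carrier W" using Suc by simp
  show ?case
  proof (cases "i < 2")
    case True
    then consider "i = 0" | "i = 1" by linarith
    then show ?thesis
    proof cases
      case 1 then show ?thesis unfolding tref_def alt_Suc using Suc by simp
    next
      case 2 then show ?thesis unfolding tref_def alt_Suc using Suc by (simp add: m_assoc)
    qed
  next
    case False
    then obtain j where j: "i = 2 + j" "j < 2 * m" using Suc
      by (metis add_less_imp_less_left le_iff_add not_less mult_Suc_right)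
    have l: "[s, t] \<in> lists S" using Suc by simp
    have "tref (alt s t (Suc m)) i = wprod W [s,t] \<otimes> tref (alt s t m) j \<otimes> inv (wprod W [s,t])"
      unfolding alt_Suc using tref_append2[OF l alt_lists[of s t m], of j] j Suc alt_length[of s t m] by simp
    also have "\<dots> = ?c \<otimes> (?c [^] j \<otimes> s) \<otimes> (t \<otimes> s)"
      using Suc j by (simp add: inv_mult_group)
    also have "\<dots> = ?c \<otimes> ?c [^] j \<otimes> ?c \<otimes> s"
      using Suc by (simp add: m_assoc)
    also have "?c \<otimes> ?c [^] j \<otimes> ?c = ?c [^] i"
      using cc j by (simp add: nat_pow_Suc2[symmetric] del: nat_pow_Suc)
    finally show ?thesis .
  qed
qed

lemma alt_nD:
  assumes st: "s \<in> S" "t \<in> S" and m: "(s \<otimes> t) [^] m = \<one>"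
  shows "nD (alt s t m) r = False"
proof -
  let ?c = "s \<otimes> t"
  let ?f = "\<lambda>i. ?c [^] i \<otimes> s"
  let ?A = "{i. i < m \<and> ?f i = r}"
  have cc: "?c \<in> carrier W" using st by simp
  have fm: "?f (m + i) = ?f i" for i
    using cc m by (simp add: nat_pow_mult[symmetric] del: nat_pow_Suc)
  have eq: "{i. i < length (alt s t m) \<and> tref (alt s t m) i = r} = ?A \<union> (\<lambda>i. m + i) ` ?A"
  proof (intro Set.set_eqI iffI)
    fix i assume "i \<in> {i. i < length (alt s t m) \<and> tref (alt s t m) i = r}"
    then have i: "i < 2 * m" "?f i = r" using alt_tref[OF st] alt_length by auto
    show "i \<in> ?A \<union> (\<lambda>i. m + i) ` ?A"
    proof (cases "i < m")
      case True then show ?thesis using i by auto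
    next
      case False
      then obtain j where j: "i = m + j" "j < m" using i
        by (metis add_less_imp_less_left le_iff_add not_less mult_2)
      then show ?thesis using i fm by auto
    qed
  next
    fix i assume "i \<in> ?A \<union> (\<lambda>i. m + i) ` ?A"
    then show "i \<in> {i. i < length (alt s t m) \<and> tref (alt s t m) i = r}"
      using alt_tref[OF st] alt_length fm by auto
  qed
  have "card (?A \<union> (\<lambda>i. m + i) ` ?A) = card ?A + card ((\<lambda>i. m + i) ` ?A)"
    by (rule card_Un_disjoint) auto
  also have "card ((\<lambda>i. m + i) ` ?A) = card ?A"
    by (rule card_image) (auto simp: inj_on_def)
  finally show ?thesis unfolding nD_def cnt_def eq by simp
qed

lemma relator_props:
  assumes "r \<in> coxeter_relators W S"
  shows "r \<in> lists S" "wprod W r = \<one>" "\<And>x. nD r x = False"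
proof -
  from assms consider (a) s where "s \<in> S" "r = [s, s]"
    | (b) s t m where "s \<in> S" "t \<in> S" "(s \<otimes> t) [^] (m::nat) = \<one>" "r = alt s t m"
    unfolding coxeter_relators_def alt_def by blast
  then have "r \<in> lists S \<and> wprod W r = \<one> \<and> (\<forall>x. nD r x = False)"
  proof cases
    case a
    have t0: "tref r 0 = s" and t1: "tref r 1 = s"
      using a unfolding tref_def by (simp_all add: m_assoc S_inv)
    have "{i. i < length r \<and> tref r i = x} = (if x = s then {0,1} else {})" for x
    proof -
      have ti: "i < 2 \<Longrightarrow> tref r i = s" for i using t0 t1 by (cases i) (auto simp: less_Suc_eq)
      show ?thesis using a ti by auto
    qed
    then have "nD r x = False" for x unfolding nD_def cnt_def by simp
    then show ?thesis using a S_inv by simp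
  next
    case b then show ?thesis using alt_lists alt_wprod alt_nD by simp
  qed
  then show "r \<in> lists S" "wprod W r = \<one>" "\<And>x. nD r x = False" by auto
qed

lemma word_equiv_inv:
  assumes "word_equiv W S xs ys"
  shows "(xs \<in> lists S \<longleftrightarrow> ys \<in> lists S) \<and>
         (xs \<in> lists S \<longrightarrow> (\<forall>x\<in>carrier W. nD xs x = nD ys x))"
  using assms
proof induct
  case (rel r u v)
  note R = relator_props[OF rel]
  show ?case
  proof (intro conjI impI ballI)
    show "(u @ r @ v \<in> lists S) = (u @ v \<in> lists S)" using R by auto
  next
    fix x assume u: "u @ r @ v \<in> lists S" and x: "x \<in> carrier W"
    then have l: "u \<in> lists S" "r \<in> lists S" "v \<in> lists S" by auto
    have c: "inv (wprod W u) \<otimes> x \<otimes> wprod W u \<in> carrier W" using l x by auto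
    have "nD (u @ r @ v) x = (nD u x \<noteq> nD (r @ v) (inv (wprod W u) \<otimes> x \<otimes> wprod W u))"
      using l x by (simp add: nD_append)
    also have "nD (r @ v) (inv (wprod W u) \<otimes> x \<otimes> wprod W u) = nD v (inv (wprod W u) \<otimes> x \<otimes> wprod W u)"
      using l c R by (simp add: nD_append)
    finally show "nD (u @ r @ v) x = nD (u @ v) x"
      using l x by (simp add: nD_append)
  qed
qed auto

definition ND :: "'a \<Rightarrow> 'a \<Rightarrow> bool" where
  "ND w r = nD (SOME xs. xs \<in> lists S \<and> wprod W xs = w) r"

lemma nD_welldef:
  assumes "xs \<in> lists S" "ys \<in> lists S" "wprod W xs = wprod W ys" "r \<in> carrier W"
  shows "nD xs r = nD ys r"
proof -
  have l: "rev ys \<in> lists S" using assms by auto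
  have e1: "wprod W (xs @ rev ys) = \<one>" using assms l by (simp add: wprod_rev)
  have e2: "wprod W (ys @ rev ys) = \<one>" using assms l by (simp add: wprod_rev)
  have "word_equiv W S (xs @ rev ys) []" using S_pres e1 assms l by simp
  then have n1: "nD (xs @ rev ys) r = False" using word_equiv_inv assms l by fastforce
  have "word_equiv W S (ys @ rev ys) []" using S_pres e2 assms l by simp
  then have n2: "nD (ys @ rev ys) r = False" using word_equiv_inv assms l by fastforce
  show ?thesis using n1 n2 nD_append[OF assms(1) l assms(4)] nD_append[OF assms(2) l assms(4)] assms(3)
    by simp
qed

lemma ND_word: "xs \<in> lists S \<Longrightarrow> r \<in> carrier W \<Longrightarrow> ND (wprod W xs) r = nD xs r"
  unfolding ND_def
  by (rule someI2[of _ xs]) (simp, metis in_lists_conv_set nD_welldef)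

lemma ND_mult:
  assumes "x \<in> carrier W" "y \<in> carrier W" "r \<in> carrier W"
  shows "ND (x \<otimes> y) r = (ND x r \<noteq> ND y (inv x \<otimes> r \<otimes> x))"
proof -
  obtain xs where xs: "xs \<in> lists S" "wprod W xs = x" using S_gen assms by blast
  obtain ys where ys: "ys \<in> lists S" "wprod W ys = y" using S_gen assms by blast
  have "x \<otimes> y = wprod W (xs @ ys)" using xs ys by simp
  then have "ND (x \<otimes> y) r = nD (xs @ ys) r" using ND_word[of "xs @ ys" r] xs ys assms by simp
  also have "\<dots> = (nD xs r \<noteq> nD ys (inv x \<otimes> r \<otimes> x))" using nD_append xs ys assms by simp
  also have "nD xs r = ND x r" using ND_word[OF xs(1) assms(3)] xs(2) by simp
  also have "nD ys (inv x \<otimes> r \<otimes> x) = ND y (inv x \<otimes> r \<otimes> x)"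
    using ND_word[OF ys(1), of "inv x \<otimes> r \<otimes> x"] ys(2) assms by simp
  finally show ?thesis .
qed

lemma ND_one [simp]: "r \<in> carrier W \<Longrightarrow> ND \<one> r = False"
  using ND_word[of "[]" r] by simp

lemma ND_S: "s \<in> S \<Longrightarrow> ND s s"
proof -
  assume s: "s \<in> S"
  have "{i. i < length [s] \<and> tref [s] i = s} = {0}" using s by (auto simp: tref_def)
  then have "nD [s] s" by (simp add: nD_def cnt_def)
  then show ?thesis using ND_word[of "[s]" s] s by simp
qed

end


context coxsys
begin

declare in_set_takeD [dest] in_set_dropD [dest]

lemma wprod_drop_closed [simp]: "\<forall>x\<in>set xs. x \<in> S \<Longrightarrow> wprod W (drop i xs) \<in> carrier W"
  by (metis in_lists_conv_set lists_drop wprod_closed')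

lemma wprod_drop_closed' [simp]: "xs \<in> lists S \<Longrightarrow> wprod W (drop i xs) \<in> carrier W"
  by (metis lists_drop wprod_closed')

lemma T_def': "r \<in> T \<longleftrightarrow> (\<exists>g s. r = g \<otimes> s \<otimes> inv g \<and> g \<in> carrier W \<and> s \<in> S)"
  unfolding reflections_def by blast

lemma T_carrier [simp]: "r \<in> T \<Longrightarrow> r \<in> carrier W"
  unfolding T_def' by auto

lemma T_sq [simp]: "r \<in> T \<Longrightarrow> r \<otimes> r = \<one>"
proof -
  assume "r \<in> T"
  then obtain g s where r: "r = g \<otimes> s \<otimes> inv g" "g \<in> carrier W" "s \<in> S" unfolding T_def' by auto
  have "r \<otimes> r = g \<otimes> (s \<otimes> (inv g \<otimes> (g \<otimes> (s \<otimes> inv g))))" using r by (simp add: m_assoc)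
  also have "\<dots> = g \<otimes> ((s \<otimes> s) \<otimes> inv g)" using r by (simp add: m_assoc)
  also have "\<dots> = \<one>" using r S_inv by simp
  finally show ?thesis .
qed

lemma T_inv [simp]: "r \<in> T \<Longrightarrow> inv r = r"
  using T_sq by (simp add: inv_equality)

lemma T_conj: "r \<in> T \<Longrightarrow> g \<in> carrier W \<Longrightarrow> g \<otimes> r \<otimes> inv g \<in> T"
proof -
  assume "r \<in> T" "g \<in> carrier W"
  then obtain h s where r: "r = h \<otimes> s \<otimes> inv h" "h \<in> carrier W" "s \<in> S" unfolding T_def' by auto
  have "g \<otimes> r \<otimes> inv g = (g \<otimes> h) \<otimes> s \<otimes> inv (g \<otimes> h)"
    using r \<open>g \<in> carrier W\<close> by (simp add: m_assoc inv_mult_group)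
  then show ?thesis using r \<open>g \<in> carrier W\<close> unfolding T_def' by blast
qed

lemma S_T: "s \<in> S \<Longrightarrow> s \<in> T"
proof -
  assume s: "s \<in> S"
  then have "s = \<one> \<otimes> s \<otimes> inv \<one>" by simp
  then show ?thesis unfolding T_def' using s by blast
qed

lemma tref_T: "xs \<in> lists S \<Longrightarrow> i < length xs \<Longrightarrow> tref xs i \<in> T"
  unfolding tref_def T_def' 
  by (rule exI[of _ "wprod W (take i xs)"], rule exI[of _ "xs ! i"]) auto

lemma ND_refl: "r \<in> T \<Longrightarrow> ND r r"
proof -
  assume "r \<in> T"
  then obtain g s where r: "r = g \<otimes> s \<otimes> inv g" "g \<in> carrier W" "s \<in> S" unfolding T_def' by auto
  have gi: "inv g \<in> carrier W" using r by simp
  have rc: "r \<in> carrier W" using r by simp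
  have e1: "inv g \<otimes> r \<otimes> g = s" using r by (simp add: m_assoc)
  have "ND (g \<otimes> inv g) r = (ND g r \<noteq> ND (inv g) s)" using ND_mult[OF r(2) gi rc] e1 by simp
  then have A: "ND (inv g) s = ND g r" using r rc by simp
  have "ND r r = ND (g \<otimes> (s \<otimes> inv g)) r" using r by (simp add: m_assoc)
  also have "\<dots> = (ND g r \<noteq> ND (s \<otimes> inv g) s)" using ND_mult[OF r(2) _ rc, of "s \<otimes> inv g"] e1 r by simp
  also have "ND (s \<otimes> inv g) s = (ND s s \<noteq> ND (inv g) (inv s \<otimes> s \<otimes> s))"
    using ND_mult[of s "inv g" s] r by simp
  also have "inv s \<otimes> s \<otimes> s = s" using r S_inv by simp
  finally show ?thesis using A ND_S r by simp
qed

definition dl :: "nat \<Rightarrow> 'a list \<Rightarrow> 'a list" where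
  "dl i xs = take i xs @ drop (Suc i) xs"

lemma dl_length: "i < length xs \<Longrightarrow> length (dl i xs) = length xs - 1"
  unfolding dl_def by simp

lemma dl_lists [intro]: "xs \<in> lists S \<Longrightarrow> dl i xs \<in> lists S"
  unfolding dl_def by (auto dest: in_set_takeD in_set_dropD)

lemma dl_subseq: "subseq (dl i xs) xs"
proof -
  have "suffix (drop 1 (drop i xs)) (drop i xs)" by (rule suffix_drop)
  then have "subseq (drop (Suc i) xs) (drop i xs)" by (simp add: suffix_imp_subseq)
  then have "subseq (take i xs @ drop (Suc i) xs) (take i xs @ drop i xs)"
    by (simp only: subseq_append')
  then show ?thesis unfolding dl_def by simp
qed

lemma tref_dl: "xs \<in> lists S \<Longrightarrow> i < length xs \<Longrightarrow> tref xs i \<otimes> wprod W xs = wprod W (dl i xs)"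
proof -
  assume a: "xs \<in> lists S" "i < length xs"
  let ?p = "wprod W (take i xs)" and ?x = "xs ! i" and ?q = "wprod W (drop (Suc i) xs)"
  have c: "?p \<in> carrier W" "?x \<in> S" "?q \<in> carrier W" using a by auto
  have "xs = take i xs @ [xs ! i] @ drop (Suc i) xs" using a by (simp add: id_take_nth_drop)
  have l2: "take i xs \<in> lists S" "[xs ! i] @ drop (Suc i) xs \<in> lists S" using a c by auto
  have "wprod W xs = ?p \<otimes> wprod W ([xs ! i] @ drop (Suc i) xs)"
    by (subst \<open>xs = _\<close>) (rule wprod_append'[OF l2])
  then have "wprod W xs = ?p \<otimes> (?x \<otimes> ?q)" by simp
  then have "tref xs i \<otimes> wprod W xs = ?p \<otimes> ?x \<otimes> inv ?p \<otimes> (?p \<otimes> (?x \<otimes> ?q))"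
    unfolding tref_def by simp
  also have "\<dots> = ?p \<otimes> ((?x \<otimes> ?x) \<otimes> ?q)" using c by (simp add: m_assoc)
  also have "\<dots> = ?p \<otimes> ?q" using c S_inv by simp
  also have "\<dots> = wprod W (dl i xs)" unfolding dl_def
    by (rule wprod_append'[symmetric]) (use a in auto)
  finally show ?thesis .
qed

lemma ND_wit: "xs \<in> lists S \<Longrightarrow> r \<in> carrier W \<Longrightarrow> ND (wprod W xs) r \<Longrightarrow> \<exists>i<length xs. tref xs i = r"
proof -
  assume a: "xs \<in> lists S" "r \<in> carrier W" "ND (wprod W xs) r"
  then have "odd (cnt xs r)" using ND_word nD_def by simp
  then have "cnt xs r \<noteq> 0" by presburger
  then have "{i. i < length xs \<and> tref xs i = r} \<noteq> {}" unfolding cnt_def by (metis card.empty)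
  then show ?thesis by auto
qed

lemma len_le: "xs \<in> lists S \<Longrightarrow> len (wprod W xs) \<le> length xs"
  unfolding cox_length_def by (rule Least_le) auto

lemma reduced_ex: "x \<in> carrier W \<Longrightarrow> \<exists>xs. reduced_word W S xs x"
proof -
  assume "x \<in> carrier W"
  then have ex: "\<exists>n xs. xs \<in> lists S \<and> length xs = n \<and> wprod W xs = x" using S_gen by blast
  have "\<exists>xs\<in>lists S. length xs = len x \<and> wprod W xs = x"
    unfolding cox_length_def by (rule LeastI_ex) (use ex in blast)
  then show ?thesis unfolding reduced_word_def by auto
qed

lemma reduced_len: "reduced_word W S xs x \<Longrightarrow> length xs = len x"
  unfolding reduced_word_def by auto

lemma reduced_lists: "reduced_word W S xs x \<Longrightarrow> xs \<in> lists S"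
  unfolding reduced_word_def by auto

lemma reduced_prod: "reduced_word W S xs x \<Longrightarrow> wprod W xs = x"
  unfolding reduced_word_def by auto

lemma reduced_iff: "reduced_word W S xs x \<longleftrightarrow> xs \<in> lists S \<and> wprod W xs = x \<and> length xs \<le> len x"
proof
  assume "reduced_word W S xs x" then show "xs \<in> lists S \<and> wprod W xs = x \<and> length xs \<le> len x"
    unfolding reduced_word_def by simp
next
  assume a: "xs \<in> lists S \<and> wprod W xs = x \<and> length xs \<le> len x"
  then have "len x \<le> length xs" using len_le by blast
  then show "reduced_word W S xs x" using a unfolding reduced_word_def by simp
qed

lemma len_one [simp]: "len \<one> = 0"
  using len_le[of "[]"] by simp

lemma len_zero: "x \<in> carrier W \<Longrightarrow> len x = 0 \<Longrightarrow> x = \<one>"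
proof -
  assume a: "x \<in> carrier W" "len x = 0"
  then obtain xs where xs: "reduced_word W S xs x" using reduced_ex by blast
  then have "xs = []" using a reduced_len by fastforce
  then show ?thesis using xs reduced_prod by fastforce
qed

lemma len_mult: "x \<in> carrier W \<Longrightarrow> y \<in> carrier W \<Longrightarrow> len (x \<otimes> y) \<le> len x + len y"
proof -
  assume "x \<in> carrier W" "y \<in> carrier W"
  then obtain xs ys where r: "reduced_word W S xs x" "reduced_word W S ys y" using reduced_ex by blast
  then have l: "xs \<in> lists S" "ys \<in> lists S" "xs @ ys \<in> lists S" using reduced_lists by auto
  have "x \<otimes> y = wprod W (xs @ ys)" using r l reduced_prod by simp
  then have "len (x \<otimes> y) \<le> length (xs @ ys)" using len_le[OF l(3)] by simp
  then show ?thesis using r reduced_len by simp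
qed

lemma len_inv: "x \<in> carrier W \<Longrightarrow> len (inv x) = len x"
proof -
  have le: "len (inv x) \<le> len x" if xc: "x \<in> carrier W" for x
  proof -
    obtain xs where r: "reduced_word W S xs x" using reduced_ex[OF xc] by blast
    then have l: "xs \<in> lists S" "rev xs \<in> lists S" using reduced_lists[OF r] by auto
    have "inv x = wprod W (rev xs)" using wprod_rev[OF l(1)] reduced_prod[OF r] by simp
    then have "len (inv x) \<le> length (rev xs)" using len_le[OF l(2)] by simp
    then show ?thesis using reduced_len[OF r] by simp
  qed
  assume x: "x \<in> carrier W"
  have 1: "len (inv x) \<le> len x" using le[OF x] .
  have 2: "len (inv (inv x)) \<le> len (inv x)" using le x by blast
  have "inv (inv x) = x" using x by simp
  then show ?thesis using 1 2 by simp
qed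

lemma len_S: "s \<in> S \<Longrightarrow> len s = 1"
proof -
  assume s: "s \<in> S"
  have "len s \<le> 1" using len_le[of "[s]"] s by simp
  moreover have "len s \<noteq> 0" using len_zero[of s] s one_notin_S by auto
  ultimately show ?thesis by simp
qed

lemma ND_len_lt: "r \<in> T \<Longrightarrow> w \<in> carrier W \<Longrightarrow> ND w r \<Longrightarrow> len (r \<otimes> w) < len w"
proof -
  assume a: "r \<in> T" "w \<in> carrier W" "ND w r"
  obtain xs where xs: "reduced_word W S xs w" using reduced_ex a by blast
  then have l: "xs \<in> lists S" "wprod W xs = w" "length xs = len w" unfolding reduced_word_def by auto
  obtain i where i: "i < length xs" "tref xs i = r" using ND_wit[of xs r] l a by auto
  have "r \<otimes> w = wprod W (dl i xs)" using tref_dl[OF l(1) i(1)] i l by simp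
  moreover have "dl i xs \<in> lists S" using l(1) by (rule dl_lists)
  ultimately have "len (r \<otimes> w) \<le> length (dl i xs)" using len_le by simp
  then have "len (r \<otimes> w) \<le> length xs - 1" using dl_length[OF i(1)] by simp
  then show ?thesis using i l by linarith
qed

lemma ND_flip: "r \<in> T \<Longrightarrow> w \<in> carrier W \<Longrightarrow> ND (r \<otimes> w) r = (\<not> ND w r)"
proof -
  assume a: "r \<in> T" "w \<in> carrier W"
  have "ND (r \<otimes> w) r = (ND r r \<noteq> ND w (inv r \<otimes> r \<otimes> r))" using ND_mult[of r w r] a by simp
  also have "inv r \<otimes> r \<otimes> r = r" using a by simp
  finally show ?thesis using ND_refl a by simp
qed

lemma len_left_refl:
  assumes "r \<in> T" "w \<in> carrier W"
  shows "len (r \<otimes> w) < len w \<longleftrightarrow> ND w r" and "len (r \<otimes> w) \<noteq> len w"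
proof -
  have rrw: "r \<otimes> (r \<otimes> w) = w" using assms by (simp add: m_assoc[symmetric])
  have "len w < len (r \<otimes> w)" if "\<not> ND w r"
    using ND_len_lt[of r "r \<otimes> w"] ND_flip[OF assms] that assms rrw by simp
  then show "len (r \<otimes> w) < len w \<longleftrightarrow> ND w r" "len (r \<otimes> w) \<noteq> len w"
    using ND_len_lt[OF assms] by force+
qed

lemma exch_left:
  assumes "xs \<in> lists S" "r \<in> T" "len (r \<otimes> wprod W xs) < len (wprod W xs)"
  shows "\<exists>i<length xs. tref xs i = r \<and> r \<otimes> wprod W xs = wprod W (dl i xs)"
proof -
  have "ND (wprod W xs) r" using len_left_refl(1)[of r "wprod W xs"] assms by simp
  then obtain i where "i < length xs" "tref xs i = r" using ND_wit[of xs r] assms by auto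
  then show ?thesis using tref_dl assms by auto
qed

lemma right_to_left: "r \<in> T \<Longrightarrow> w \<in> carrier W \<Longrightarrow> w \<otimes> r = (w \<otimes> r \<otimes> inv w) \<otimes> w"
  by (simp add: m_assoc)

lemma exch_right:
  assumes "xs \<in> lists S" "r \<in> T" "len (wprod W xs \<otimes> r) < len (wprod W xs)"
  shows "\<exists>i<length xs. wprod W xs \<otimes> r = wprod W (dl i xs)"
proof -
  let ?w = "wprod W xs"
  have r': "?w \<otimes> r \<otimes> inv ?w \<in> T" using T_conj assms by simp
  have "?w \<otimes> r = (?w \<otimes> r \<otimes> inv ?w) \<otimes> ?w" using right_to_left assms by simp
  then show ?thesis using exch_left[OF assms(1) r'] assms by auto
qed

lemma len_right_refl: "r \<in> T \<Longrightarrow> w \<in> carrier W \<Longrightarrow> len (w \<otimes> r) \<noteq> len w"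
  using len_left_refl(2)[of "w \<otimes> r \<otimes> inv w" w] right_to_left T_conj by simp

lemma len_mult_S_ge: "x \<in> carrier W \<Longrightarrow> s \<in> S \<Longrightarrow> len x \<le> len (x \<otimes> s) + 1"
proof -
  assume a: "x \<in> carrier W" "s \<in> S"
  have "x = (x \<otimes> s) \<otimes> s" using a S_inv by (simp add: m_assoc)
  then show ?thesis using len_mult[of "x \<otimes> s" s] len_S a by simp
qed

lemma len_mult_S_le: "x \<in> carrier W \<Longrightarrow> s \<in> S \<Longrightarrow> len (x \<otimes> s) \<le> len x + 1"
  using len_mult[of x s] len_S[of s] by simp

lemma len_S_mult_ge: "x \<in> carrier W \<Longrightarrow> s \<in> S \<Longrightarrow> len x \<le> len (s \<otimes> x) + 1"
proof -
  assume a: "x \<in> carrier W" "s \<in> S"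
  have "x = s \<otimes> (s \<otimes> x)" using a S_inv by (simp add: m_assoc[symmetric])
  then show ?thesis using len_mult[of s "s \<otimes> x"] len_S a by simp
qed

lemma len_S_mult_le: "x \<in> carrier W \<Longrightarrow> s \<in> S \<Longrightarrow> len (s \<otimes> x) \<le> len x + 1"
  using len_mult[of s x] len_S[of s] by simp

end


context coxsys
begin

declare in_set_takeD [dest] in_set_dropD [dest]

lemma subseq_lists: "subseq ys xs \<Longrightarrow> xs \<in> lists A \<Longrightarrow> ys \<in> lists A"
  by (induct rule: list_emb.induct) auto

lemma subseq_set: "subseq ys xs \<Longrightarrow> set ys \<subseteq> set xs"
  by (induct rule: list_emb.induct) auto

lemma subseq_snoc_cases:
  assumes "subseq ys (xs @ [x])"
  shows "subseq ys xs \<or> (\<exists>ys'. ys = ys' @ [x] \<and> subseq ys' xs)"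
proof -
  obtain a b where ab: "ys = a @ b" "subseq a xs" "subseq b [x]"
    using assms by (auto elim: subseq_appendE)
  have "b = [] \<or> b = [x]" using ab(3)
  proof (cases b)
    case (Cons c b')
    then show ?thesis using ab(3) by (cases "c = x") auto
  qed simp
  then show ?thesis using ab by auto
qed

lemma deletion: "xs \<in> lists S \<Longrightarrow> \<exists>zs. subseq zs xs \<and> reduced_word W S zs (wprod W xs)"
proof (induct xs rule: rev_induct)
  case Nil
  have "reduced_word W S [] \<one>" unfolding reduced_word_def by simp
  then show ?case by auto
next
  case (snoc y xs)
  then have l: "xs \<in> lists S" "y \<in> S" by auto
  then obtain zs where zs: "subseq zs xs" "reduced_word W S zs (wprod W xs)" using snoc by blast
  let ?z = "wprod W xs"
  have zl: "zs \<in> lists S" "wprod W zs = ?z" "length zs = len ?z" using zs(2) unfolding reduced_word_def by auto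
  have zc: "?z \<in> carrier W" using l by simp
  have w: "wprod W (xs @ [y]) = ?z \<otimes> y" using l by simp
  show ?case
  proof (cases "len (?z \<otimes> y) < len ?z")
    case True
    obtain i where i: "i < length zs" "?z \<otimes> y = wprod W (dl i zs)"
      using exch_right[OF zl(1) S_T[OF l(2)]] True zl by auto
    have "length (dl i zs) = len ?z - 1" using dl_length[OF i(1)] zl by simp
    also have "\<dots> \<le> len (?z \<otimes> y)" using len_mult_S_ge[OF zc l(2)] by simp
    finally have "reduced_word W S (dl i zs) (?z \<otimes> y)"
      unfolding reduced_iff using i dl_lists[OF zl(1)] by auto
    then have r: "reduced_word W S (dl i zs) (wprod W (xs @ [y]))" unfolding w .
    have "subseq (dl i zs) xs"
      using dl_subseq zs(1) by (rule subseq_order.order_trans)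
    then have "subseq (dl i zs) (xs @ [y])" by (rule subseq_rev_drop_many)
    with r show ?thesis by (intro exI[of _ "dl i zs"] conjI)
  next
    case False
    then have "len ?z < len (?z \<otimes> y)" using len_right_refl[OF S_T[OF l(2)] zc] by simp
    then have "reduced_word W S (zs @ [y]) (?z \<otimes> y)"
      unfolding reduced_iff using zl l by auto
    then have r: "reduced_word W S (zs @ [y]) (wprod W (xs @ [y]))" unfolding w .
    have "subseq (zs @ [y]) (xs @ [y])" using zs(1) by simp
    with r show ?thesis by (intro exI[of _ "zs @ [y]"] conjI)
  qed
qed

lemma parabolic_wprod: "xs \<in> lists K \<Longrightarrow> wprod W xs \<in> parabolic W K"
  unfolding parabolic_def by blast

lemma parabolicE: "x \<in> parabolic W K \<Longrightarrow> (\<And>xs. xs \<in> lists K \<Longrightarrow> x = wprod W xs \<Longrightarrow> P) \<Longrightarrow> P"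
  unfolding parabolic_def by blast

lemma parabolic_carrier: "K \<subseteq> S \<Longrightarrow> x \<in> parabolic W K \<Longrightarrow> x \<in> carrier W"
  by (erule parabolicE) (metis lists_mono subsetD wprod_closed')

lemma parabolic_one [simp]: "\<one> \<in> parabolic W K"
  using parabolic_wprod[of "[]" K] by simp

lemma parabolic_mult: "K \<subseteq> S \<Longrightarrow> x \<in> parabolic W K \<Longrightarrow> y \<in> parabolic W K \<Longrightarrow> x \<otimes> y \<in> parabolic W K"
proof -
  assume K: "K \<subseteq> S" and x: "x \<in> parabolic W K" and y: "y \<in> parabolic W K"
  obtain xs where xs: "xs \<in> lists K" "x = wprod W xs" using x by (rule parabolicE)
  obtain ys where ys: "ys \<in> lists K" "y = wprod W ys" using y by (rule parabolicE)
  have "xs \<in> lists S" "ys \<in> lists S" using xs ys K by auto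
  then have "x \<otimes> y = wprod W (xs @ ys)" using xs ys by simp
  then show ?thesis using xs ys parabolic_wprod[of "xs @ ys" K] by simp
qed

lemma parabolic_inv: "K \<subseteq> S \<Longrightarrow> x \<in> parabolic W K \<Longrightarrow> inv x \<in> parabolic W K"
proof -
  assume K: "K \<subseteq> S" and x: "x \<in> parabolic W K"
  obtain xs where xs: "xs \<in> lists K" "x = wprod W xs" using x by (rule parabolicE)
  have "xs \<in> lists S" using xs K by auto
  then have "inv x = wprod W (rev xs)" using xs wprod_rev by simp
  moreover have "rev xs \<in> lists K" using xs by auto
  ultimately show ?thesis using parabolic_wprod[of "rev xs" K] by simp
qed

lemma parabolic_S: "K \<subseteq> S \<Longrightarrow> s \<in> K \<Longrightarrow> s \<in> parabolic W K"
  using parabolic_wprod[of "[s]" K] by auto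

lemma parabolic_mono: "K \<subseteq> K' \<Longrightarrow> x \<in> parabolic W K \<Longrightarrow> x \<in> parabolic W K'"
  by (erule parabolicE) (metis lists_mono subsetD parabolic_wprod)

lemma tref_parabolic: "xs \<in> lists S \<Longrightarrow> i < length xs \<Longrightarrow> tref xs i \<in> parabolic W (set xs)"
proof -
  assume a: "xs \<in> lists S" "i < length xs"
  let ?t = "take i xs"
  have l1: "?t \<in> lists S" using lists_take[OF a(1)] .
  have l: "?t \<in> lists S" "[xs ! i] \<in> lists S" "rev ?t \<in> lists S"
    using l1 lists_nth[OF a] by auto
  have "tref xs i = wprod W (?t @ [xs ! i] @ rev ?t)"
    unfolding tref_def using l by (simp add: wprod_rev m_assoc)
  moreover have "?t @ [xs ! i] @ rev ?t \<in> lists (set xs)"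
    using set_take_subset[of i xs] nth_mem[OF a(2)] by auto
  ultimately show ?thesis using parabolic_wprod by simp
qed

lemma S_in_parabolic: "K \<subseteq> S \<Longrightarrow> y \<in> S \<Longrightarrow> y \<in> parabolic W K \<Longrightarrow> y \<in> K"
proof -
  assume K: "K \<subseteq> S" and y: "y \<in> S" "y \<in> parabolic W K"
  obtain ks where ks: "ks \<in> lists K" "y = wprod W ks" using y(2) by (rule parabolicE)
  have kS: "ks \<in> lists S" using ks K by auto
  obtain zs where zs: "subseq zs ks" "reduced_word W S zs y" using deletion[OF kS] ks by auto
  have "length zs = 1" using zs(2) len_S[OF y(1)] reduced_len by simp
  then obtain k where k: "zs = [k]" by (metis One_nat_def length_0_conv length_Suc_conv)
  have "k \<in> set ks" using subseq_set[OF zs(1)] k by auto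
  moreover have "y = k"
  proof -
    have "[k] \<in> lists S" using subseq_lists[OF zs(1) kS] k by simp
    then have kS: "k \<in> S" by simp
    have "wprod W [k] = y" using zs(2) k reduced_prod[of "[k]" y] by blast
    then show ?thesis using kS by simp
  qed
  ultimately show ?thesis using ks by auto
qed

lemma same_letters:
  "reduced_word W S ys w \<Longrightarrow> reduced_word W S xs w \<Longrightarrow> set ys \<subseteq> set xs"
proof (induct ys arbitrary: xs w)
  case Nil then show ?case by simp
next
  case (Cons y ys)
  have yl: "y \<in> S" "ys \<in> lists S" using reduced_lists[OF Cons(2)] by auto
  have xl: "xs \<in> lists S" "wprod W xs = w" "length xs = len w" using Cons(3) unfolding reduced_word_def by auto
  have w: "w = y \<otimes> wprod W ys" "length ys + 1 = len w" using Cons(2) unfolding reduced_word_def by auto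
  have wc: "w \<in> carrier W" using xl by auto
  have yw: "y \<otimes> w = wprod W ys" using w yl S_inv by (simp add: m_assoc[symmetric])
  have "len (y \<otimes> w) \<le> length ys" using yw len_le yl by simp
  then have lt: "len (y \<otimes> w) < len w" using w by simp
  obtain i where i: "i < length xs" "tref xs i = y" "y \<otimes> w = wprod W (dl i xs)"
    using exch_left[OF xl(1) S_T[OF yl(1)]] lt xl by auto
  have ge: "len w \<le> len (y \<otimes> w) + 1" using len_S_mult_ge[OF wc yl(1)] .
  have r1: "reduced_word W S (dl i xs) (y \<otimes> w)"
    unfolding reduced_iff using i dl_length[OF i(1)] xl ge dl_lists[OF xl(1)] by auto
  have r2: "reduced_word W S ys (y \<otimes> w)"
    unfolding reduced_iff using yw yl w ge by auto
  have "set ys \<subseteq> set (dl i xs)" using Cons(1)[OF r2 r1] .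
  also have "\<dots> \<subseteq> set xs" using subseq_set[OF dl_subseq] .
  finally have 1: "set ys \<subseteq> set xs" .
  have "y \<in> parabolic W (set xs)" using tref_parabolic[OF xl(1) i(1)] i(2) by simp
  then have "y \<in> set xs" using S_in_parabolic[of "set xs" y] xl yl by auto
  then show ?case using 1 by simp
qed

lemma supp_eq: "reduced_word W S xs x \<Longrightarrow> supp W S x = set xs"
  unfolding supp_def using same_letters by blast

lemma parabolic_letters:
  "K \<subseteq> S \<Longrightarrow> x \<in> parabolic W K \<Longrightarrow> reduced_word W S xs x \<Longrightarrow> set xs \<subseteq> K"
proof -
  assume K: "K \<subseteq> S" and x: "x \<in> parabolic W K" and r: "reduced_word W S xs x"
  obtain ks where ks: "ks \<in> lists K" "x = wprod W ks" using x by (rule parabolicE)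
  have kS: "ks \<in> lists S" using ks K by auto
  obtain zs where zs: "subseq zs ks" "reduced_word W S zs x" using deletion[OF kS] ks by auto
  have "set xs \<subseteq> set zs" using same_letters[OF r zs(2)] .
  also have "\<dots> \<subseteq> set ks" using subseq_set[OF zs(1)] .
  finally show ?thesis using ks by auto
qed

lemma reduced_parabolic: "reduced_word W S xs x \<Longrightarrow> x \<in> parabolic W (set xs)"
  using parabolic_wprod[of xs "set xs"] reduced_prod by auto

lemma supp_parabolic: "x \<in> carrier W \<Longrightarrow> x \<in> parabolic W (supp W S x)"
  using reduced_ex reduced_parabolic supp_eq by metis

lemma wprod_single: "xs \<in> lists {s} \<Longrightarrow> s \<in> S \<Longrightarrow> wprod W xs = \<one> \<or> wprod W xs = s"
proof (induct xs)
  case Nil then show ?case by simp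
next
  case (Cons a xs)
  then have "a = s" by auto
  then show ?case using Cons S_inv by auto
qed

lemma parabolic_inter:
  assumes "A \<subseteq> S" "J \<subseteq> S" "A \<inter> J \<subseteq> {s}" "s \<in> S"
    "x \<in> parabolic W A" "x \<in> parabolic W J"
  shows "x = \<one> \<or> x = s"
proof -
  have xc: "x \<in> carrier W" using parabolic_carrier assms by blast
  obtain xs where r: "reduced_word W S xs x" using reduced_ex[OF xc] by blast
  have "set xs \<subseteq> A" "set xs \<subseteq> J" using parabolic_letters r assms by blast+
  then have "xs \<in> lists {s}" using assms by auto
  then show ?thesis using wprod_single assms r reduced_prod by blast
qed

end


context coxsys
begin

lemma bruhat_refl: "x \<in> carrier W \<Longrightarrow> bruhat_le W S x x"
  unfolding bruhat_le_def by simp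

lemma bruhat_trans: "bruhat_le W S x y \<Longrightarrow> bruhat_le W S y z \<Longrightarrow> bruhat_le W S x z"
  unfolding bruhat_le_def by (meson rtranclp_trans)

lemma bruhat_stepI: "x \<in> carrier W \<Longrightarrow> t \<in> T \<Longrightarrow> len x < len (x \<otimes> t) \<Longrightarrow> bruhat_le W S x (x \<otimes> t)"
  unfolding bruhat_le_def bruhat_step_def by (intro conjI r_into_rtranclp) auto

lemma bruhat_carrier: "bruhat_le W S x y \<Longrightarrow> x \<in> carrier W \<and> y \<in> carrier W"
  unfolding bruhat_le_def by simp

lemma bruhat_subword:
  assumes "bruhat_le W S x w" "reduced_word W S ws w"
  shows "\<exists>ys. subseq ys ws \<and> wprod W ys = x"
proof -
  have ws: "ws \<in> lists S" "wprod W ws = w" using assms(2) unfolding reduced_word_def by auto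
  have "(bruhat_step W S)\<^sup>*\<^sup>* x w" using assms(1) unfolding bruhat_le_def by simp
  then show ?thesis
  proof (induct rule: converse_rtranclp_induct)
    case base
    then show ?case using ws by auto
  next
    case (step x y)
    from step(3) obtain ys where ys: "subseq ys ws" "wprod W ys = y" by blast
    have yl: "ys \<in> lists S" using subseq_lists[OF ys(1) ws(1)] .
    obtain zs where zs: "subseq zs ys" "reduced_word W S zs y" using deletion[OF yl] ys by auto
    have zl: "zs \<in> lists S" "wprod W zs = y" using zs(2) unfolding reduced_word_def by auto
    obtain t where t: "x \<in> carrier W" "t \<in> T" "y = x \<otimes> t" "len x < len y"
      using step(1) unfolding bruhat_step_def by auto
    have yt: "y \<otimes> t = x" using t by (simp add: m_assoc)
    obtain i where i: "i < length zs" "wprod W zs \<otimes> t = wprod W (dl i zs)"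
      using exch_right[OF zl(1) t(2)] yt zl t by auto
    have "subseq (dl i zs) ws"
      using dl_subseq zs(1) ys(1) by (meson subseq_order.order_trans)
    moreover have "wprod W (dl i zs) = x" using i zl yt by simp
    ultimately show ?case by blast
  qed
qed

lemma one_step_lemma:
  assumes a: "a \<in> carrier W" "t \<in> T" "len a < len (a \<otimes> t)" "s \<in> S"
  shows "bruhat_le W S (a \<otimes> s) (a \<otimes> t) \<or> bruhat_le W S (a \<otimes> s) (a \<otimes> t \<otimes> s)"
proof -
  let ?c = "a \<otimes> t"
  have cc: "?c \<in> carrier W" using a by simp
  have sT: "s \<in> T" using S_T a by simp
  have asc: "a \<otimes> s \<in> carrier W" using a by simp
  have ac: "bruhat_le W S a ?c" using bruhat_stepI a by simp
  show ?thesis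
  proof (cases "len (a \<otimes> s) < len a")
    case True
    have "a \<otimes> s \<otimes> s = a" using a S_inv by (simp add: m_assoc)
    then have "bruhat_le W S (a \<otimes> s) a" using bruhat_stepI[OF asc sT] True by simp
    then show ?thesis using ac bruhat_trans by blast
  next
    case False
    then have gt: "len a < len (a \<otimes> s)" using len_right_refl[OF sT a(1)] by simp
    have le1: "len (a \<otimes> s) \<le> len a + 1" using len_mult_S_le a by simp
    show ?thesis
    proof (cases "a \<otimes> s = ?c")
      case True then show ?thesis using bruhat_refl cc by simp
    next
      case ne: False
      have sts: "s \<otimes> t \<otimes> s \<in> T" using T_conj[OF a(2), of s] a by simp
      have cs: "?c \<otimes> s = (a \<otimes> s) \<otimes> (s \<otimes> t \<otimes> s)"
        using a S_inv by (simp add: m_assoc[symmetric]) (simp add: m_assoc)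
      show ?thesis
      proof (cases "len (a \<otimes> s) < len (?c \<otimes> s)")
        case True
        then show ?thesis using bruhat_stepI[OF asc sts] cs by simp
      next
        case False
        have "len (?c \<otimes> s) \<noteq> len (a \<otimes> s)" using len_right_refl[OF sts asc] cs by simp
        then have lt: "len (?c \<otimes> s) < len (a \<otimes> s)" using False by simp
        have ge: "len ?c \<le> len (?c \<otimes> s) + 1" using len_mult_S_ge[OF cc a(4)] .
        have lcs: "len (?c \<otimes> s) = len a" using lt ge gt le1 a(3) by linarith
        have lc: "len ?c = len a + 1" using lt ge gt le1 a(3) by linarith
        obtain zs where zs: "reduced_word W S zs (?c \<otimes> s)" using reduced_ex[of "?c \<otimes> s"] cc a by auto
        have zl: "zs \<in> lists S" "wprod W zs = ?c \<otimes> s" "length zs = len a"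
          using zs lcs unfolding reduced_word_def by auto
        have l2: "zs @ [s] \<in> lists S" using zl a by simp
        have wz: "wprod W (zs @ [s]) = ?c" using zl a S_inv cc by (simp add: m_assoc)
        have ct: "?c \<otimes> t = a" using a by (simp add: m_assoc)
        obtain i where i: "i < length (zs @ [s])" "wprod W (zs @ [s]) \<otimes> t = wprod W (dl i (zs @ [s]))"
          using exch_right[OF l2 a(2)] wz ct lc by auto
        show ?thesis
        proof (cases "i = length zs")
          case True
          then have "dl i (zs @ [s]) = zs" unfolding dl_def by simp
          then have aeq: "a = ?c \<otimes> s" using i wz ct zl by simp
          have "a \<otimes> s = ?c \<otimes> s \<otimes> s" using aeq by simp
          also have "\<dots> = ?c" using cc a S_inv by (simp add: m_assoc)
          finally have "a \<otimes> s = ?c" .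
          then show ?thesis using ne by simp
        next
          case False
          then have il: "i < length zs" using i by simp
          then have "dl i (zs @ [s]) = dl i zs @ [s]" unfolding dl_def by simp
          then have "a = wprod W (dl i zs) \<otimes> s" using i wz ct dl_lists[OF zl(1)] a by simp
          then have "a \<otimes> s = wprod W (dl i zs)" using dl_lists[OF zl(1)] a S_inv by (simp add: m_assoc)
          then have "len (a \<otimes> s) \<le> length (dl i zs)" using len_le dl_lists[OF zl(1)] by simp
          then have "len (a \<otimes> s) \<le> len a - 1" using dl_length[OF il] zl by simp
          then show ?thesis using gt by simp
        qed
      qed
    qed
  qed
qed

lemma bruhat_mult_S:
  assumes "bruhat_le W S a b" "s \<in> S"
  shows "bruhat_le W S (a \<otimes> s) b \<or> bruhat_le W S (a \<otimes> s) (b \<otimes> s)"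
proof -
  have bc: "b \<in> carrier W" using assms bruhat_carrier by blast
  have "(bruhat_step W S)\<^sup>*\<^sup>* a b" using assms(1) unfolding bruhat_le_def by simp
  then show ?thesis
  proof (induct rule: converse_rtranclp_induct)
    case base
    then show ?case using bruhat_refl bc assms by simp
  next
    case (step a c)
    obtain t where t: "a \<in> carrier W" "t \<in> T" "c = a \<otimes> t" "len a < len c"
      using step(1) unfolding bruhat_step_def by auto
    have "bruhat_le W S (a \<otimes> s) c \<or> bruhat_le W S (a \<otimes> s) (c \<otimes> s)"
      using one_step_lemma[OF t(1) t(2) _ assms(2)] t by simp
    moreover have cb: "bruhat_le W S c b" using step(2) bc t unfolding bruhat_le_def by simp
    ultimately show ?case using step(3) bruhat_trans
      by (meson bc bruhat_carrier assms(2) bruhat_stepI)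
  qed
qed

lemma reduced_snoc: "reduced_word W S (xs @ [x]) w \<Longrightarrow> reduced_word W S xs (wprod W xs)"
proof -
  assume r: "reduced_word W S (xs @ [x]) w"
  have l0: "xs @ [x] \<in> lists S" using reduced_lists[OF r] .
  then have l1: "xs \<in> lists S" "x \<in> S" by auto
  have "wprod W (xs @ [x]) = wprod W xs \<otimes> x" using wprod_append'[of xs "[x]"] l1 by simp
  then have l: "xs \<in> lists S" "x \<in> S" "wprod W xs \<otimes> x = w" "length xs + 1 = len w"
    using l1 r unfolding reduced_word_def by auto
  have "len w \<le> len (wprod W xs) + 1" using len_mult_S_le[of "wprod W xs" x] l by simp
  then show ?thesis unfolding reduced_iff using l by simp
qed

lemma subword_bruhat:
  "reduced_word W S ws w \<Longrightarrow> subseq ys ws \<Longrightarrow> bruhat_le W S (wprod W ys) w"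
proof (induct ws arbitrary: ys w rule: rev_induct)
  case Nil
  then have "ys = []" "w = \<one>" unfolding reduced_word_def by auto
  then show ?case using bruhat_refl by simp
next
  case (snoc x ws)
  have l0: "ws @ [x] \<in> lists S" using reduced_lists[OF snoc(2)] .
  then have l1: "ws \<in> lists S" "x \<in> S" by auto
  have "wprod W (ws @ [x]) = wprod W ws \<otimes> x" using wprod_append'[of ws "[x]"] l1 by simp
  then have l: "ws \<in> lists S" "x \<in> S" "wprod W ws \<otimes> x = w" "length ws + 1 = len w"
    using l1 snoc(2) unfolding reduced_word_def by auto
  let ?w' = "wprod W ws"
  have r': "reduced_word W S ws ?w'" using reduced_snoc[OF snoc(2)] .
  have wc: "?w' \<in> carrier W" using l by simp
  have "len ?w' = length ws" using r' reduced_len by simp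
  then have "bruhat_le W S ?w' (?w' \<otimes> x)" using bruhat_stepI[OF wc S_T[OF l(2)]] l by simp
  then have ww: "bruhat_le W S ?w' w" using l by simp
  from subseq_snoc_cases[OF snoc(3)] show ?case
  proof
    assume "subseq ys ws"
    then show ?thesis using snoc(1)[OF r'] ww bruhat_trans by blast
  next
    assume "\<exists>ys'. ys = ys' @ [x] \<and> subseq ys' ws"
    then obtain ys' where ys': "ys = ys' @ [x]" "subseq ys' ws" by blast
    have yl: "ys' \<in> lists S" using subseq_lists[OF ys'(2) l(1)] .
    have ih: "bruhat_le W S (wprod W ys') ?w'" using snoc(1)[OF r' ys'(2)] .
    have "wprod W ys = wprod W ys' \<otimes> x" using ys' yl l by simp
    then show ?thesis using bruhat_mult_S[OF ih l(2)] ww l bruhat_trans by auto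
  qed
qed

lemma one_le: "x \<in> carrier W \<Longrightarrow> bruhat_le W S \<one> x"
  using reduced_ex subword_bruhat[of _ x "[]"] by fastforce

end


context coxsys
begin

lemma dl_append1: "i < length xs \<Longrightarrow> dl i (xs @ ys) = dl i xs @ ys"
  unfolding dl_def by simp

lemma dl_append2: "length xs \<le> i \<Longrightarrow> dl i (xs @ ys) = xs @ dl (i - length xs) ys"
  unfolding dl_def by (simp add: Suc_diff_le)

lemma min_additive:
  assumes J: "J \<subseteq> S" and m: "m \<in> carrier W"
    and mini: "\<And>h. h \<in> parabolic W J \<Longrightarrow> len m \<le> len (m \<otimes> h)"
  shows "h \<in> parabolic W J \<Longrightarrow> len (m \<otimes> h) = len m + len h"
proof -
  have "\<forall>h. h \<in> parabolic W J \<longrightarrow> len h = n \<longrightarrow> len (m \<otimes> h) = len m + n" for n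
  proof (induct n)
    case 0
    show ?case
    proof (intro allI impI)
      fix h assume h: "h \<in> parabolic W J" "len h = 0"
      then have "h = \<one>" using len_zero parabolic_carrier[OF J h(1)] by blast
      then show "len (m \<otimes> h) = len m + 0" using m by simp
    qed
  next
    case (Suc n)
    show ?case
    proof (intro allI impI)
      fix h assume h: "h \<in> parabolic W J" "len h = Suc n"
      have hc: "h \<in> carrier W" using parabolic_carrier[OF J h(1)] .
      obtain hs where hs: "reduced_word W S hs h" using reduced_ex[OF hc] by blast
      have hsJ: "set hs \<subseteq> J" using parabolic_letters[OF J h(1) hs] .
      have "length hs = Suc n" using reduced_len[OF hs] h(2) by simp
      then have "hs \<noteq> []" by auto
      then obtain hs' r where hsr: "hs = hs' @ [r]" by (metis rev_exhaust)
      have rJ: "r \<in> J" "hs' \<in> lists J" using hsJ hsr by auto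
      have rS: "r \<in> S" "hs' \<in> lists S" using rJ J by auto
      let ?h' = "wprod W hs'"
      have h'c: "?h' \<in> carrier W" using rS by simp
      have hs2: "reduced_word W S (hs' @ [r]) h" using hs hsr by simp
      have rh': "reduced_word W S hs' ?h'" using reduced_snoc[OF hs2] .
      have "length hs' = n" using reduced_len[OF hs2] h(2) by simp
      then have lh': "len ?h' = n" using reduced_len[OF rh'] by simp
      have "wprod W (hs' @ [r]) = h" using reduced_prod[OF hs2] .
      then have hh: "h = ?h' \<otimes> r" using rS by simp
      have h'J: "?h' \<in> parabolic W J" using parabolic_wprod rJ by simp
      have IH: "len (m \<otimes> ?h') = len m + n" using Suc h'J lh' by blast
      have mh'c: "m \<otimes> ?h' \<in> carrier W" using m h'c by simp
      have le: "len (m \<otimes> ?h' \<otimes> r) \<le> len (m \<otimes> ?h') + 1" using len_mult_S_le[OF mh'c rS(1)] .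
      have ne: "len (m \<otimes> ?h' \<otimes> r) \<noteq> len (m \<otimes> ?h')" using len_right_refl[OF S_T[OF rS(1)] mh'c] .
      obtain ms where ms: "reduced_word W S ms m" using reduced_ex[OF m] by blast
      have msl: "ms \<in> lists S" "wprod W ms = m" "length ms = len m" using ms unfolding reduced_word_def by auto
      have "\<not> len (m \<otimes> ?h' \<otimes> r) < len (m \<otimes> ?h')"
      proof
        assume lt: "len (m \<otimes> ?h' \<otimes> r) < len (m \<otimes> ?h')"
        have wl: "ms @ hs' \<in> lists S" using msl rS by simp
        have wp: "wprod W (ms @ hs') = m \<otimes> ?h'" using msl rS by simp
        obtain i where i: "i < length (ms @ hs')" "m \<otimes> ?h' \<otimes> r = wprod W (dl i (ms @ hs'))"
          using exch_right[OF wl S_T[OF rS(1)]] wp lt by auto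
        show False
        proof (cases "i < length ms")
          case True
          let ?m' = "wprod W (dl i ms)"
          have m'l: "dl i ms \<in> lists S" using dl_lists msl by blast
          have eq: "m \<otimes> ?h' \<otimes> r = ?m' \<otimes> ?h'"
            using i dl_append1[OF True] m'l rS by simp
          let ?g = "?h' \<otimes> r \<otimes> inv ?h'"
          have gJ: "?g \<in> parabolic W J"
            using parabolic_mult[OF J] parabolic_inv[OF J] h'J parabolic_S[OF J rJ(1)] by simp
          have "m \<otimes> ?g = ?m'"
          proof -
            have "m \<otimes> ?g = (m \<otimes> ?h' \<otimes> r) \<otimes> inv ?h'" using m h'c rS by (simp add: m_assoc)
            also have "\<dots> = ?m'" using eq m'l h'c by (simp add: m_assoc)
            finally show ?thesis .
          qed
          then have "len m \<le> len ?m'" using mini[OF gJ] by simp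
          also have "len ?m' \<le> length (dl i ms)" using len_le[OF m'l] .
          also have "\<dots> = len m - 1" using dl_length[OF True] msl by simp
          finally show False using True msl by simp
        next
          case False
          let ?j = "i - length ms"
          have jl: "?j < length hs'" using i False by simp
          have dl': "dl ?j hs' \<in> lists S" using dl_lists rS by blast
          have "m \<otimes> ?h' \<otimes> r = m \<otimes> wprod W (dl ?j hs')"
            using i dl_append2[of ms i hs'] False msl dl' by simp
          then have "m \<otimes> (?h' \<otimes> r) = m \<otimes> wprod W (dl ?j hs')" using m h'c rS by (simp add: m_assoc)
          then have "?h' \<otimes> r = wprod W (dl ?j hs')" using m h'c rS dl' by simp
          then have "len h \<le> length (dl ?j hs')" using hh len_le[OF dl'] by simp
          also have "\<dots> = n - 1" using dl_length[OF jl] reduced_len[OF rh'] lh' by simp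
          finally show False using h(2) by simp
        qed
      qed
      then have "len (m \<otimes> ?h' \<otimes> r) = len (m \<otimes> ?h') + 1" using le ne by simp
      then show "len (m \<otimes> h) = len m + Suc n" using IH hh m h'c rS by (simp add: m_assoc)
    qed
  qed
  then show "h \<in> parabolic W J \<Longrightarrow> len (m \<otimes> h) = len m + len h" by blast
qed

definition cos :: "'a set \<Rightarrow> 'a \<Rightarrow> 'a set" where
  "cos J x = {x \<otimes> h | h. h \<in> parabolic W J}"

lemma min_rep_cos: "min_rep W S J x = (THE u. u \<in> cos J x \<and> (\<forall>v\<in>cos J x. v \<noteq> u \<longrightarrow> len u < len v))"
  unfolding min_rep_def cos_def by simp

lemma min_rep_props:
  assumes J: "J \<subseteq> S" and x: "x \<in> carrier W"
  shows "\<exists>hm\<in>parabolic W J. min_rep W S J x = x \<otimes> hm"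
    and "\<And>h. h \<in> parabolic W J \<Longrightarrow> len (min_rep W S J x \<otimes> h) = len (min_rep W S J x) + len h"
proof -
  have "x = x \<otimes> \<one>" using x by simp
  then have xin: "x \<in> cos J x" unfolding cos_def using parabolic_one by blast
  have "\<exists>m. m \<in> cos J x \<and> (\<forall>v. v \<in> cos J x \<longrightarrow> len m \<le> len v)"
    by (rule ex_has_least_nat[of "\<lambda>v. v \<in> cos J x" x len, OF xin])
  then obtain m where m: "m \<in> cos J x" "\<And>v. v \<in> cos J x \<Longrightarrow> len m \<le> len v"
    by blast
  obtain hm where hm: "hm \<in> parabolic W J" "m = x \<otimes> hm" using m(1) unfolding cos_def by auto
  have hmc: "hm \<in> carrier W" using parabolic_carrier[OF J hm(1)] .
  have mc: "m \<in> carrier W" using hm hmc x by simp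
  have mini: "len m \<le> len (m \<otimes> h)" if "h \<in> parabolic W J" for h
  proof -
    have "m \<otimes> h = x \<otimes> (hm \<otimes> h)" using hm hmc x parabolic_carrier[OF J that] by (simp add: m_assoc)
    moreover have "hm \<otimes> h \<in> parabolic W J" using parabolic_mult[OF J hm(1) that] .
    ultimately have "m \<otimes> h \<in> cos J x" unfolding cos_def by blast
    then show ?thesis using m(2) by simp
  qed
  have add: "len (m \<otimes> g) = len m + len g" if "g \<in> parabolic W J" for g
    by (rule min_additive[OF J mc _ that]) (rule mini)
  have Qm: "m \<in> cos J x \<and> (\<forall>v\<in>cos J x. v \<noteq> m \<longrightarrow> len m < len v)"
  proof (intro conjI ballI impI)
    show "m \<in> cos J x" using m(1) .
  next
    fix v assume v: "v \<in> cos J x" "v \<noteq> m"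
    obtain hv where hv: "hv \<in> parabolic W J" "v = x \<otimes> hv" using v(1) unfolding cos_def by auto
    have hvc: "hv \<in> carrier W" using parabolic_carrier[OF J hv(1)] .
    let ?g = "inv hm \<otimes> hv"
    have gJ: "?g \<in> parabolic W J" using parabolic_mult[OF J parabolic_inv[OF J hm(1)] hv(1)] .
    have gc: "?g \<in> carrier W" using hmc hvc by simp
    have vm: "v = m \<otimes> ?g" using hm hv hmc hvc x by (simp add: m_assoc)
    have "?g \<noteq> \<one>" using vm v(2) mc by auto
    then have "len ?g \<noteq> 0" using len_zero[OF gc] by auto
    then show "len m < len v" using add[OF gJ] vm by simp
  qed
  have "min_rep W S J x = m"
    unfolding min_rep_cos
  proof (rule the_equality)
    show "m \<in> cos J x \<and> (\<forall>v\<in>cos J x. v \<noteq> m \<longrightarrow> len m < len v)" using Qm .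
  next
    fix u assume u: "u \<in> cos J x \<and> (\<forall>v\<in>cos J x. v \<noteq> u \<longrightarrow> len u < len v)"
    show "u = m"
    proof (rule ccontr)
      assume um: "u \<noteq> m"
      have 1: "len u < len m" using u m(1) um by auto
      have "u \<in> cos J x" using u by simp
      then have 2: "len m < len u" using Qm um by auto
      show False using 1 2 by simp
    qed
  qed
  then show "\<exists>hm\<in>parabolic W J. min_rep W S J x = x \<otimes> hm" using hm by blast
  show "\<And>h. h \<in> parabolic W J \<Longrightarrow> len (min_rep W S J x \<otimes> h) = len (min_rep W S J x) + len h"
    using add \<open>min_rep W S J x = m\<close> by simp
qed

lemma mr_carrier: "J \<subseteq> S \<Longrightarrow> x \<in> carrier W \<Longrightarrow> min_rep W S J x \<in> carrier W"
proof -
  assume J: "J \<subseteq> S" and x: "x \<in> carrier W"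
  obtain hm where hm: "hm \<in> parabolic W J" "min_rep W S J x = x \<otimes> hm" using min_rep_props(1)[OF J x] by blast
  then show ?thesis using parabolic_carrier[OF J hm(1)] x by simp
qed

lemma pp_parabolic: "J \<subseteq> S \<Longrightarrow> x \<in> carrier W \<Longrightarrow> par_part W S J x \<in> parabolic W J"
proof -
  assume J: "J \<subseteq> S" and x: "x \<in> carrier W"
  obtain hm where hm: "hm \<in> parabolic W J" "min_rep W S J x = x \<otimes> hm" using min_rep_props(1)[OF J x] by blast
  have hmc: "hm \<in> carrier W" using parabolic_carrier[OF J hm(1)] .
  have "par_part W S J x = inv hm" unfolding par_part_def hm(2) using x hmc
    by (simp add: inv_mult_group m_assoc)
  then show ?thesis using parabolic_inv[OF J hm(1)] by simp
qed

lemma pp_carrier: "J \<subseteq> S \<Longrightarrow> x \<in> carrier W \<Longrightarrow> par_part W S J x \<in> carrier W"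
  using pp_parabolic parabolic_carrier by blast

lemma mr_pp: "J \<subseteq> S \<Longrightarrow> x \<in> carrier W \<Longrightarrow> min_rep W S J x \<otimes> par_part W S J x = x"
  unfolding par_part_def using mr_carrier by (simp add: m_assoc[symmetric])

lemma mr_len: "J \<subseteq> S \<Longrightarrow> x \<in> carrier W \<Longrightarrow> len x = len (min_rep W S J x) + len (par_part W S J x)"
proof -
  assume J: "J \<subseteq> S" and x: "x \<in> carrier W"
  have "len (min_rep W S J x \<otimes> par_part W S J x) = len (min_rep W S J x) + len (par_part W S J x)"
    using min_rep_props(2)[OF J x pp_parabolic[OF J x]] .
  then show ?thesis using mr_pp[OF J x] by simp
qed

lemma mr_invariant:
  assumes J: "J \<subseteq> S" and x: "x \<in> carrier W" and h: "h \<in> parabolic W J"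
  shows "min_rep W S J (x \<otimes> h) = min_rep W S J x"
proof -
  have hc: "h \<in> carrier W" using parabolic_carrier[OF J h] .
  have "cos J (x \<otimes> h) = cos J x"
  proof (intro Set.set_eqI iffI)
    fix v assume "v \<in> cos J (x \<otimes> h)"
    then obtain g where g: "g \<in> parabolic W J" "v = x \<otimes> h \<otimes> g" unfolding cos_def by auto
    have "v = x \<otimes> (h \<otimes> g)" using g x hc parabolic_carrier[OF J g(1)] by (simp add: m_assoc)
    then show "v \<in> cos J x" unfolding cos_def using parabolic_mult[OF J h g(1)] by blast
  next
    fix v assume "v \<in> cos J x"
    then obtain g where g: "g \<in> parabolic W J" "v = x \<otimes> g" unfolding cos_def by auto
    have gc: "g \<in> carrier W" using parabolic_carrier[OF J g(1)] .
    have "v = x \<otimes> h \<otimes> (inv h \<otimes> g)" using g x hc gc by (simp add: m_assoc)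
    then show "v \<in> cos J (x \<otimes> h)" unfolding cos_def
      using parabolic_mult[OF J parabolic_inv[OF J h] g(1)] by blast
  qed
  then show ?thesis unfolding min_rep_cos by simp
qed

lemma mr_idem: "J \<subseteq> S \<Longrightarrow> x \<in> carrier W \<Longrightarrow> min_rep W S J (min_rep W S J x) = min_rep W S J x"
proof -
  assume J: "J \<subseteq> S" and x: "x \<in> carrier W"
  obtain hm where hm: "hm \<in> parabolic W J" "min_rep W S J x = x \<otimes> hm" using min_rep_props(1)[OF J x] by blast
  then show ?thesis using mr_invariant[OF J x hm(1)] by simp
qed

end


context coxsys
begin

lemma refl_factor:
  assumes A: "A \<subseteq> S" and J: "J \<subseteq> S" and AJ: "A \<inter> J \<subseteq> {s}" and s: "s \<in> S"
    and a: "a \<in> parabolic W A" and b: "b \<in> parabolic W J" and t: "a \<otimes> b \<in> T"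
  shows "a = \<one> \<or> a = s \<or> b = \<one> \<or> b = s"
proof -
  have ac: "a \<in> carrier W" using parabolic_carrier[OF A a] .
  have bc: "b \<in> carrier W" using parabolic_carrier[OF J b] .
  have inter: "\<And>x. x \<in> parabolic W A \<Longrightarrow> x \<in> parabolic W J \<Longrightarrow> x = \<one> \<or> x = s"
    using parabolic_inter[OF A J AJ s] by blast
  obtain as' where as: "as' \<in> lists A" "a = wprod W as'" using a by (rule parabolicE)
  obtain bs where bs: "bs \<in> lists J" "b = wprod W bs" using b by (rule parabolicE)
  have asS: "as' \<in> lists S" using as A by auto
  have bsS: "bs \<in> lists S" using bs J by auto
  have wl: "as' @ bs \<in> lists S" using asS bsS by simp
  have ab: "wprod W (as' @ bs) = a \<otimes> b" using asS bsS as bs by simp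
  obtain zs where zs: "subseq zs (as' @ bs)" "reduced_word W S zs (a \<otimes> b)"
    using deletion[OF wl] ab by auto
  obtain z1 z2 where z: "zs = z1 @ z2" "subseq z1 as'" "subseq z2 bs" using zs(1) by (rule subseq_appendE)
  have z1A: "z1 \<in> lists A" using subseq_lists[OF z(2) as(1)] .
  have z2J: "z2 \<in> lists J" using subseq_lists[OF z(3) bs(1)] .
  have z1S: "z1 \<in> lists S" using z1A A by auto
  have z2S: "z2 \<in> lists S" using z2J J by auto
  let ?a' = "wprod W z1" and ?b' = "wprod W z2" and ?t = "a \<otimes> b"
  have a'A: "?a' \<in> parabolic W A" using parabolic_wprod[OF z1A] .
  have b'J: "?b' \<in> parabolic W J" using parabolic_wprod[OF z2J] .
  have a'c: "?a' \<in> carrier W" using z1S by simp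
  have b'c: "?b' \<in> carrier W" using z2S by simp
  have zsl: "zs \<in> lists S" "wprod W zs = ?t" using zs(2) unfolding reduced_word_def by auto
  have tt: "?a' \<otimes> ?b' = ?t" using zsl z z1S z2S by simp
  have tc: "?t \<in> carrier W" using ac bc by simp
  have "len (?t \<otimes> \<one>) \<noteq> len \<one>" using len_left_refl(2)[OF t, of \<one>] by simp
  then have "0 < len ?t" using tc by simp
  then have "len (?t \<otimes> wprod W zs) < len (wprod W zs)" using zsl t by simp
  then obtain i where i: "i < length zs" "tref zs i = ?t" using exch_left[OF zsl(1) t] by auto
  have key: "?a' = \<one> \<or> ?a' = s \<or> ?b' = \<one> \<or> ?b' = s"
  proof (cases "i < length z1")
    case True
    have "tref zs i = tref z1 i" using tref_append1[OF True] z by simp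
    then have "?t \<in> parabolic W (set z1)" using tref_parabolic[OF z1S True] i by simp
    moreover have "set z1 \<subseteq> A" using z1A by auto
    ultimately have tA: "?t \<in> parabolic W A" using parabolic_mono by blast
    have "inv ?a' \<otimes> ?t = inv ?a' \<otimes> (?a' \<otimes> ?b')" using tt by simp
    then have "?b' = inv ?a' \<otimes> ?t" using a'c b'c by simp
    moreover have "inv ?a' \<otimes> ?t \<in> parabolic W A" using parabolic_mult[OF A parabolic_inv[OF A a'A] tA] .
    ultimately have "?b' \<in> parabolic W A" by simp
    then show ?thesis using inter b'J by blast
  next
    case False
    let ?j = "i - length z1"
    have ij: "i = length z1 + ?j" using False by simp
    have jl: "?j < length z2" using i z False by simp
    let ?r = "tref z2 ?j"
    have "tref zs i = ?a' \<otimes> ?r \<otimes> inv ?a'" using tref_append2[OF z1S z2S jl] z ij by simp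
    then have eq: "?a' \<otimes> ?b' = ?a' \<otimes> ?r \<otimes> inv ?a'" using i tt by simp
    have rT: "?r \<in> T" using tref_T[OF z2S jl] .
    have rc: "?r \<in> carrier W" using rT by simp
    have "set z2 \<subseteq> J" using z2J by auto
    then have rJ: "?r \<in> parabolic W J"
      using tref_parabolic[OF z2S jl] parabolic_mono by blast
    have "?a' \<otimes> ?b' = ?a' \<otimes> (?r \<otimes> inv ?a')" using eq a'c rc by (simp add: m_assoc)
    then have b'eq: "?b' = ?r \<otimes> inv ?a'" using a'c b'c rc by simp
    have "?r \<otimes> ?b' = (?r \<otimes> ?r) \<otimes> inv ?a'" using b'eq rc a'c by (simp add: m_assoc)
    then have "?r \<otimes> ?b' = inv ?a'" using rT a'c by simp
    then have "inv ?a' \<in> parabolic W J" using parabolic_mult[OF J rJ b'J] by simp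
    then have "inv (inv ?a') \<in> parabolic W J" using parabolic_inv[OF J] by blast
    then have "?a' \<in> parabolic W J" using a'c by simp
    then show ?thesis using inter a'A by blast
  qed
  define c where "c = inv a \<otimes> ?a'"
  have cc: "c \<in> carrier W" using ac a'c c_def by simp
  have cA: "c \<in> parabolic W A" unfolding c_def using parabolic_mult[OF A parabolic_inv[OF A a] a'A] .
  have a'eq: "?a' = a \<otimes> b \<otimes> inv ?b'" using inv_solve_right[of ?a' ?t ?b'] tt a'c b'c tc by simp
  have cb: "c = b \<otimes> inv ?b'" unfolding c_def using a'eq ac bc b'c by (simp add: m_assoc)
  then have cJ: "c \<in> parabolic W J" using parabolic_mult[OF J b parabolic_inv[OF J b'J]] by simp
  have c1s: "c = \<one> \<or> c = s" using inter cA cJ by blast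
  have ss: "s \<otimes> s = \<one>" using S_inv s by simp
  have sc: "s \<in> carrier W" using s by simp
  have si: "inv s = s" using s by simp
  have aeq: "a = ?a' \<otimes> inv c" unfolding c_def using ac a'c by (simp add: inv_mult_group m_assoc)
  have beq: "b = c \<otimes> ?b'" unfolding cb using bc b'c by (simp add: m_assoc)
  from key show ?thesis
  proof (elim disjE)
    assume h: "?a' = \<one>" show ?thesis using c1s
    proof
      assume "c = \<one>" then show ?thesis using aeq h by simp
    next
      assume "c = s" then show ?thesis using aeq h sc si by simp
    qed
  next
    assume h: "?a' = s" show ?thesis using c1s
    proof
      assume "c = \<one>" then show ?thesis using aeq h sc si by simp
    next
      assume "c = s" then show ?thesis using aeq h sc ss si by simp
    qed
  next
    assume h: "?b' = \<one>" show ?thesis using c1s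
    proof
      assume "c = \<one>" then show ?thesis using beq h by simp
    next
      assume "c = s" then show ?thesis using beq h sc by simp
    qed
  next
    assume h: "?b' = s" show ?thesis using c1s
    proof
      assume "c = \<one>" then show ?thesis using beq h sc by simp
    next
      assume "c = s" then show ?thesis using beq h sc ss by simp
    qed
  qed
qed

lemma edge_iff: "x \<in> carrier W \<Longrightarrow> y \<in> carrier W \<Longrightarrow> bruhat_edge W S x y \<longleftrightarrow> inv x \<otimes> y \<in> T"
proof
  assume "x \<in> carrier W" "y \<in> carrier W" "bruhat_edge W S x y"
  then obtain t where "t \<in> T" "y = x \<otimes> t" unfolding bruhat_edge_def by auto
  then show "inv x \<otimes> y \<in> T" using \<open>x \<in> carrier W\<close> by simp
next
  assume a: "x \<in> carrier W" "y \<in> carrier W" "inv x \<otimes> y \<in> T"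
  have "y = x \<otimes> (inv x \<otimes> y)" using a by simp
  then show "bruhat_edge W S x y" unfolding bruhat_edge_def using a by blast
qed

end


locale bpsetup = coxsys +
  fixes J :: "'a set" and w s :: 'a
  assumes J: "J \<subseteq> S" and wc: "w \<in> carrier W" and BP: "BP_decomposition W S J w"
    and sS: "s \<in> S"
    and int: "supp W S (min_rep W S J w) \<inter> supp W S (par_part W S J w) = {s}"
begin

abbreviation uu where "uu \<equiv> min_rep W S J w"
abbreviation vv where "vv \<equiv> par_part W S J w"
abbreviation AA where "AA \<equiv> supp W S uu"
abbreviation phi where "phi x \<equiv> min_rep W S J x \<otimes> s \<otimes> par_part W S J x"

lemma uc: "uu \<in> carrier W" using mr_carrier[OF J wc] .
lemma vc: "vv \<in> carrier W" using pp_carrier[OF J wc] .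
lemma vJ: "vv \<in> parabolic W J" using pp_parabolic[OF J wc] .
lemma uvw: "uu \<otimes> vv = w" using mr_pp[OF J wc] .
lemma lenw: "len w = len uu + len vv" using mr_len[OF J wc] .
lemma sc: "s \<in> carrier W" using sS by simp

definition us where "us = (SOME xs. reduced_word W S xs uu)"

lemma us_red: "reduced_word W S us uu"
  unfolding us_def using reduced_ex[OF uc] by (rule someI_ex)

lemma A_eq: "AA = set us" using supp_eq[OF us_red] .

lemma A_S: "AA \<subseteq> S" using A_eq reduced_lists[OF us_red] by auto

lemma suppv_J: "supp W S vv \<subseteq> J"
proof -
  obtain xs where xs: "reduced_word W S xs vv" using reduced_ex[OF vc] by blast
  then show ?thesis using supp_eq[OF xs] parabolic_letters[OF J vJ xs] by simp
qed

lemma DL_supp: "r \<in> left_descents W S vv \<Longrightarrow> r \<in> supp W S vv"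
proof -
  assume "r \<in> left_descents W S vv"
  then have r: "r \<in> S" "len (r \<otimes> vv) < len vv" unfolding left_descents_def by auto
  have rvc: "r \<otimes> vv \<in> carrier W" using r vc by simp
  obtain rs where rs: "reduced_word W S rs (r \<otimes> vv)" using reduced_ex[OF rvc] by blast
  have rl: "rs \<in> lists S" "wprod W rs = r \<otimes> vv" "length rs = len (r \<otimes> vv)"
    using rs unfolding reduced_word_def by auto
  have "wprod W (r # rs) = vv" using rl r vc S_inv by (simp add: m_assoc[symmetric])
  then have "reduced_word W S (r # rs) vv" unfolding reduced_iff using rl r by simp
  then show ?thesis using supp_eq by fastforce
qed

lemma sv: "s \<in> supp W S vv" and sA: "s \<in> AA" using int by auto

lemma sJ: "s \<in> J" using sv suppv_J by auto

lemma AJ: "AA \<inter> J \<subseteq> {s}"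
proof
  fix x assume x: "x \<in> AA \<inter> J"
  then have "x \<in> left_descents W S vv" using BP unfolding BP_decomposition_def by auto
  then have "x \<in> supp W S vv" by (rule DL_supp)
  then show "x \<in> {s}" using x int by auto
qed

lemma sDL: "len (s \<otimes> vv) < len vv"
proof -
  have "s \<in> AA \<inter> J" using sA sJ by blast
  then have "s \<in> left_descents W S vv" using BP unfolding BP_decomposition_def by blast
  then show ?thesis unfolding left_descents_def by blast
qed

definition vs' where "vs' = (SOME xs. reduced_word W S xs (s \<otimes> vv))"

lemma vs'_red: "reduced_word W S vs' (s \<otimes> vv)"
proof -
  have "s \<otimes> vv \<in> carrier W" using sc vc by simp
  then have "\<exists>xs. reduced_word W S xs (s \<otimes> vv)" by (rule reduced_ex)
  then show ?thesis unfolding vs'_def by (rule someI_ex)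
qed

abbreviation vs where "vs \<equiv> s # vs'"

lemma vs_red: "reduced_word W S vs vv"
proof -
  have rl: "vs' \<in> lists S" "wprod W vs' = s \<otimes> vv" "length vs' = len (s \<otimes> vv)"
    using vs'_red unfolding reduced_word_def by auto
  have "wprod W vs = vv" using rl sS vc S_inv by (simp add: m_assoc[symmetric])
  then show ?thesis unfolding reduced_iff using rl sS sDL by simp
qed

lemma vs_J: "set vs \<subseteq> J" using supp_eq[OF vs_red] suppv_J by simp

lemma ws_red: "reduced_word W S (us @ vs) w"
proof -
  have l: "us \<in> lists S" "vs \<in> lists S" using reduced_lists us_red vs_red by blast+
  have "wprod W (us @ vs) = w" using l reduced_prod[OF us_red] reduced_prod[OF vs_red] uvw by simp
  moreover have "length (us @ vs) = len w" using reduced_len[OF us_red] reduced_len[OF vs_red] lenw by simp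
  ultimately show ?thesis unfolding reduced_word_def using l by simp
qed

lemma decomp:
  assumes x: "bruhat_le W S x w"
  shows "\<exists>m h y2 m'. min_rep W S J x = m \<and> par_part W S J x = h \<otimes> wprod W y2 \<and>
    m \<in> parabolic W AA \<and> (h = \<one> \<or> h = s) \<and> subseq y2 vs \<and> subseq m' us \<and> wprod W m' = m"
proof -
  obtain ys where ys: "subseq ys (us @ vs)" "wprod W ys = x" using bruhat_subword[OF x ws_red] by blast
  obtain y1 y2 where y: "ys = y1 @ y2" "subseq y1 us" "subseq y2 vs" using ys(1) by (rule subseq_appendE)
  have y1A: "y1 \<in> lists AA" using subseq_lists[OF y(2)] A_eq by auto
  have y2J: "y2 \<in> lists J" using subseq_lists[OF y(3)] vs_J by auto
  have y1S: "y1 \<in> lists S" using y1A A_S by auto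
  have y2S: "y2 \<in> lists S" using y2J J by auto
  let ?u1 = "wprod W y1" and ?v1 = "wprod W y2"
  have u1c: "?u1 \<in> carrier W" using y1S by simp
  have v1c: "?v1 \<in> carrier W" using y2S by simp
  have u1A: "?u1 \<in> parabolic W AA" using parabolic_wprod[OF y1A] .
  have v1J: "?v1 \<in> parabolic W J" using parabolic_wprod[OF y2J] .
  have xeq: "x = ?u1 \<otimes> ?v1" using ys y y1S y2S by simp
  let ?m = "min_rep W S J ?u1" and ?h = "par_part W S J ?u1"
  have mc: "?m \<in> carrier W" using mr_carrier[OF J u1c] .
  have hc: "?h \<in> carrier W" using pp_carrier[OF J u1c] .
  have hJ: "?h \<in> parabolic W J" using pp_parabolic[OF J u1c] .
  obtain ms where ms: "reduced_word W S ms ?m" using reduced_ex[OF mc] by blast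
  obtain hs where hs: "reduced_word W S hs ?h" using reduced_ex[OF hc] by blast
  have msl: "ms \<in> lists S" "wprod W ms = ?m" "length ms = len ?m" using ms unfolding reduced_word_def by auto
  have hsl: "hs \<in> lists S" "wprod W hs = ?h" "length hs = len ?h" using hs unfolding reduced_word_def by auto
  have mhr: "reduced_word W S (ms @ hs) ?u1"
    unfolding reduced_word_def using msl hsl mr_pp[OF J u1c] mr_len[OF J u1c] by simp
  have "set (ms @ hs) \<subseteq> AA" using parabolic_letters[OF A_S u1A mhr] .
  then have msA: "ms \<in> lists AA" and hsA: "hs \<in> lists AA" by auto
  have mA: "?m \<in> parabolic W AA" using parabolic_wprod[OF msA] msl by simp
  have hA: "?h \<in> parabolic W AA" using parabolic_wprod[OF hsA] hsl by simp
  have h1s: "?h = \<one> \<or> ?h = s" using parabolic_inter[OF A_S J AJ sS hA hJ] .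
  have hv1J: "?h \<otimes> ?v1 \<in> parabolic W J" using parabolic_mult[OF J hJ v1J] .
  have "?m \<otimes> (?h \<otimes> ?v1) = (?m \<otimes> ?h) \<otimes> ?v1" using mc hc v1c by (simp add: m_assoc)
  also have "\<dots> = x" using xeq mr_pp[OF J u1c] by simp
  finally have x2: "x = ?m \<otimes> (?h \<otimes> ?v1)" by simp
  have mrx: "min_rep W S J x = ?m"
    using x2 mr_invariant[OF J mc hv1J] mr_idem[OF J u1c] by simp
  have "par_part W S J x = inv ?m \<otimes> x" unfolding par_part_def mrx ..
  also have "\<dots> = ?h \<otimes> ?v1" by (subst x2) (simp add: mc hc v1c)
  finally have ppx: "par_part W S J x = ?h \<otimes> ?v1" .
  have "bruhat_le W S ?m ?u1"
    using subword_bruhat[OF mhr, of ms] msl by (simp add: subseq_rev_drop_many)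
  moreover have "bruhat_le W S ?u1 uu" using subword_bruhat[OF us_red y(2)] .
  ultimately have "bruhat_le W S ?m uu" by (rule bruhat_trans)
  then obtain m' where m': "subseq m' us" "wprod W m' = ?m" using bruhat_subword[OF _ us_red] by blast
  show ?thesis using mrx ppx mA h1s y(3) m' by blast
qed

lemma mr_A: "bruhat_le W S x w \<Longrightarrow> min_rep W S J x \<in> parabolic W AA"
  using decomp by blast

lemma subseq_Cons_cases: "subseq ys (a # xs) \<Longrightarrow> subseq ys xs \<or> (\<exists>ys'. ys = a # ys' \<and> subseq ys' xs)"
proof (cases ys)
  case (Cons c ys')
  assume "subseq ys (a # xs)"
  then show ?thesis using Cons by (cases "c = a") auto
qed simp

lemma phi_le:
  assumes x: "bruhat_le W S x w"
  shows "bruhat_le W S (phi x) w"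
proof -
  obtain m h y2 m' where d: "min_rep W S J x = m" "par_part W S J x = h \<otimes> wprod W y2"
    "m \<in> parabolic W AA" "h = \<one> \<or> h = s" "subseq y2 vs" "subseq m' us" "wprod W m' = m"
    using decomp[OF x] by blast
  have vsl: "vs \<in> lists S" using reduced_lists[OF vs_red] .
  have usl: "us \<in> lists S" using reduced_lists[OF us_red] .
  have y2S: "y2 \<in> lists S" using subseq_lists[OF d(5) vsl] .
  have m'S: "m' \<in> lists S" using subseq_lists[OF d(6) usl] .
  have y2c: "wprod W y2 \<in> carrier W" using y2S by simp
  have hc: "h \<in> carrier W" using d(4) sc by auto
  have "\<exists>y3. subseq y3 vs \<and> wprod W y3 = s \<otimes> (h \<otimes> wprod W y2)"
    using d(4)
  proof
    assume h: "h = \<one>"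
    from subseq_Cons_cases[OF d(5)] show ?thesis
    proof
      assume "subseq y2 vs'"
      then have "subseq (s # y2) vs" by simp
      moreover have "wprod W (s # y2) = s \<otimes> (h \<otimes> wprod W y2)" using h y2c by simp
      ultimately show ?thesis by blast
    next
      assume "\<exists>ys'. y2 = s # ys' \<and> subseq ys' vs'"
      then obtain y2' where y2': "y2 = s # y2'" "subseq y2' vs'" by blast
      have "y2' \<in> lists S" using y2S y2' by simp
      then have "s \<otimes> (h \<otimes> wprod W y2) = wprod W y2'"
        using h y2' sS S_inv by (simp add: m_assoc[symmetric])
      moreover have "subseq y2' vs" using list_emb.list_emb_Cons[OF y2'(2)] .
      ultimately show ?thesis by metis
    qed
  next
    assume h: "h = s"
    have "s \<otimes> (h \<otimes> wprod W y2) = wprod W y2" using h sS S_inv y2c by (simp add: m_assoc[symmetric])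
    then show ?thesis using d(5) by metis
  qed
  then obtain y3 where y3: "subseq y3 vs" "wprod W y3 = s \<otimes> (h \<otimes> wprod W y2)" by blast
  have y3S: "y3 \<in> lists S" using subseq_lists[OF y3(1) vsl] .
  have mc: "m \<in> carrier W" using wprod_closed'[OF m'S] d(7) by simp
  have "phi x = m \<otimes> (s \<otimes> (h \<otimes> wprod W y2))"
    using d(1,2) mc sc hc y2c by (simp add: m_assoc)
  also have "\<dots> = wprod W (m' @ y3)" using y3 d(7) m'S y3S by simp
  finally have px: "phi x = wprod W (m' @ y3)" .
  have "subseq (m' @ y3) (us @ vs)" using d(6) y3(1) by (rule list_emb_append_mono)
  then show ?thesis using subword_bruhat[OF ws_red] px by simp
qed

lemma phi_carrier: "x \<in> carrier W \<Longrightarrow> phi x \<in> carrier W"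
  using mr_carrier[OF J] pp_carrier[OF J] sc by simp

lemma phi_invol: "x \<in> carrier W \<Longrightarrow> phi (phi x) = x"
proof -
  assume x: "x \<in> carrier W"
  let ?m = "min_rep W S J x" and ?p = "par_part W S J x"
  have mc: "?m \<in> carrier W" using mr_carrier[OF J x] .
  have pc: "?p \<in> carrier W" using pp_carrier[OF J x] .
  have sp: "s \<otimes> ?p \<in> parabolic W J"
    using parabolic_mult[OF J parabolic_S[OF J sJ] pp_parabolic[OF J x]] .
  have ph: "phi x = ?m \<otimes> (s \<otimes> ?p)" using mc pc sc by (simp add: m_assoc)
  have m2: "min_rep W S J (phi x) = ?m"
    using ph mr_invariant[OF J mc sp] mr_idem[OF J x] by simp
  have "par_part W S J (phi x) = inv (min_rep W S J (phi x)) \<otimes> phi x" by (rule par_part_def)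
  also have "\<dots> = inv ?m \<otimes> (?m \<otimes> (s \<otimes> ?p))" using m2 ph by simp
  also have "\<dots> = s \<otimes> ?p" using mc pc sc by simp
  finally have p2: "par_part W S J (phi x) = s \<otimes> ?p" .
  have "phi (phi x) = ?m \<otimes> s \<otimes> (s \<otimes> ?p)" using m2 p2 by simp
  also have "\<dots> = ?m \<otimes> (s \<otimes> (s \<otimes> ?p))" using mc pc sc by (simp add: m_assoc)
  also have "\<dots> = ?m \<otimes> ?p" using sc pc S_inv[OF sS] by (simp add: m_assoc[symmetric])
  also have "\<dots> = x" using mr_pp[OF J x] .
  finally show ?thesis .
qed

lemma edge_phi:
  assumes x: "bruhat_le W S x w" and y: "bruhat_le W S y w" and e: "bruhat_edge W S x y"
  shows "bruhat_edge W S (phi x) (phi y)"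
proof -
  have xc: "x \<in> carrier W" and yc: "y \<in> carrier W" using x y bruhat_carrier by blast+
  define p where "p = min_rep W S J x"
  define h where "h = par_part W S J x"
  define q where "q = min_rep W S J y"
  define k where "k = par_part W S J y"
  have pc: "p \<in> carrier W" using mr_carrier[OF J xc] p_def by simp
  have hc: "h \<in> carrier W" using pp_carrier[OF J xc] h_def by simp
  have qc: "q \<in> carrier W" using mr_carrier[OF J yc] q_def by simp
  have kc: "k \<in> carrier W" using pp_carrier[OF J yc] k_def by simp
  have pA: "p \<in> parabolic W AA" using mr_A[OF x] p_def by simp
  have qA: "q \<in> parabolic W AA" using mr_A[OF y] q_def by simp
  have hJ: "h \<in> parabolic W J" using pp_parabolic[OF J xc] h_def by simp
  have kJ: "k \<in> parabolic W J" using pp_parabolic[OF J yc] k_def by simp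
  have xe: "x = p \<otimes> h" using mr_pp[OF J xc] p_def h_def by simp
  have ye: "y = q \<otimes> k" using mr_pp[OF J yc] q_def k_def by simp
  have px: "phi x = p \<otimes> s \<otimes> h" using p_def h_def by simp
  have py: "phi y = q \<otimes> s \<otimes> k" using q_def k_def by simp
  have t: "inv (p \<otimes> h) \<otimes> (q \<otimes> k) \<in> T" using edge_iff[OF xc yc] e xe ye by simp
  define a where "a = inv p \<otimes> q"
  define b where "b = k \<otimes> inv h"
  have aA: "a \<in> parabolic W AA" unfolding a_def using parabolic_mult[OF A_S parabolic_inv[OF A_S pA] qA] .
  have bJ: "b \<in> parabolic W J" unfolding b_def using parabolic_mult[OF J kJ parabolic_inv[OF J hJ]] .
  have ac: "a \<in> carrier W" using pc qc a_def by simp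
  have bc: "b \<in> carrier W" using kc hc b_def by simp
  have "h \<otimes> (inv (p \<otimes> h) \<otimes> (q \<otimes> k)) \<otimes> inv h = a \<otimes> b"
    unfolding a_def b_def using pc hc qc kc by (simp add: m_assoc inv_mult_group)
  then have abT: "a \<otimes> b \<in> T" using T_conj[OF t hc] by simp
  have ss: "s \<otimes> s = \<one>" using S_inv sS by simp
  have si: "inv s = s" using sS by simp
  have key: "s \<otimes> a \<otimes> s \<otimes> b \<in> T"
    using refl_factor[OF A_S J AJ sS aA bJ abT]
  proof (elim disjE)
    assume h: "a = \<one>"
    have "s \<otimes> a \<otimes> s \<otimes> b = a \<otimes> b" using h ss bc sc by simp
    then show ?thesis using abT by simp
  next
    assume h: "a = s"
    have "s \<otimes> a \<otimes> s \<otimes> b = a \<otimes> b" using h ss bc sc by simp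
    then show ?thesis using abT by simp
  next
    assume h: "b = \<one>"
    have "s \<otimes> a \<otimes> s \<otimes> b = s \<otimes> (a \<otimes> b) \<otimes> inv s" using h ac sc si by (simp add: m_assoc)
    then show ?thesis using T_conj[OF abT sc] by simp
  next
    assume h: "b = s"
    have "s \<otimes> a \<otimes> s \<otimes> b = s \<otimes> (a \<otimes> b) \<otimes> inv s" using h ac sc si by (simp add: m_assoc)
    then show ?thesis using T_conj[OF abT sc] by simp
  qed
  have ihc: "inv h \<in> carrier W" using hc by simp
  have "inv (p \<otimes> s \<otimes> h) \<otimes> (q \<otimes> s \<otimes> k) = inv h \<otimes> (s \<otimes> a \<otimes> s \<otimes> b) \<otimes> inv (inv h)"
    unfolding a_def b_def using pc hc qc kc sc si by (simp add: m_assoc inv_mult_group)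
  then have "inv (phi x) \<otimes> phi y \<in> T" using T_conj[OF key ihc] px py by simp
  then show ?thesis using edge_iff phi_carrier xc yc by simp
qed

lemma main: "bruhat_graph_automorphism W S w phi"
proof -
  let ?V = "bruhat_interval W S \<one> w"
  have V: "x \<in> ?V \<longleftrightarrow> bruhat_le W S \<one> x \<and> bruhat_le W S x w" for x
    unfolding bruhat_interval_def by simp
  have Vc: "x \<in> ?V \<Longrightarrow> x \<in> carrier W" for x using V bruhat_carrier by blast
  have im: "phi ` ?V \<subseteq> ?V"
  proof
    fix y assume "y \<in> phi ` ?V"
    then obtain x where x: "x \<in> ?V" "y = phi x" by blast
    have "bruhat_le W S (phi x) w" using phi_le x V by blast
    moreover have "bruhat_le W S \<one> (phi x)" using one_le phi_carrier Vc x by blast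
    ultimately show "y \<in> ?V" using V x by simp
  qed
  have inv: "\<forall>a\<in>?V. phi (phi a) = a" using phi_invol Vc by blast
  have bij: "bij_betw phi ?V ?V" by (rule bij_betw_byWitness[OF inv inv im im])
  have edges: "\<forall>x\<in>?V. \<forall>y\<in>?V. bruhat_edge W S x y \<longleftrightarrow> bruhat_edge W S (phi x) (phi y)"
  proof (intro ballI iffI)
    fix x y assume xy: "x \<in> ?V" "y \<in> ?V" "bruhat_edge W S x y"
    then show "bruhat_edge W S (phi x) (phi y)" using edge_phi V by blast
  next
    fix x y assume xy: "x \<in> ?V" "y \<in> ?V" "bruhat_edge W S (phi x) (phi y)"
    have "phi x \<in> ?V" "phi y \<in> ?V" using im xy by auto
    then have "bruhat_edge W S (phi (phi x)) (phi (phi y))" using edge_phi V xy(3) by blast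
    then show "bruhat_edge W S x y" using inv xy by simp
  qed
  show ?thesis unfolding bruhat_graph_automorphism_def Let_def using bij edges by blast
qed

end

theorem proposition3p4:
  fixes W :: "('a, 'b) monoid_scheme" and S J :: "'a set" and w s :: 'a
  assumes "coxeter_system W S"
    and "w \<in> carrier W"
    and "J \<subseteq> S"
    and "BP_decomposition W S J w"
    and "s \<in> S"
    and "supp W S (min_rep W S J w) \<inter> supp W S (par_part W S J w) = {s}"
  shows "bruhat_graph_automorphism W S w
           (\<lambda>x. min_rep W S J x \<otimes>\<^bsub>W\<^esub> s \<otimes>\<^bsub>W\<^esub> par_part W S J x)"
proof -
  have g: "group W" using assms(1) unfolding coxeter_system_def by blast
  interpret bpsetup W S J w s
    by (rule bpsetup.intro[OF coxsys.intro[OF g coxsys_axioms.intro[OF assms(1)]] bpsetup_axioms.intro])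
      (use assms in auto)
  show ?thesis by (rule main)
qed

end
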